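(* Consider the asynchronous best response dynamics $Z(t)$ described in the context, with an arbitrary distribution of the initial configuration $Z(0)$ on $[0,1]^n$. Then there exists a nonnegative random time $T$ with $\mathbb P(T<+\infty)=1$ such that $Z_i(t)<1$ for every $i\in\mathcal V$ and every $t\ge T$.
   Context: Let $n\ge1$ and $\mathcal V=\{1,\dots,n\}$. Let $P\in\mathbb{R}^{n\times n}$ be a row-stochastic, irreducible, aperiodic matrix (the graph on $\mathcal V$ with edge $(i,j)$ iff $P_{ij}>0$ is strongly connected with gcd of cycle lengths $1$). For $z\in[0,1]^n$, $W(z)=(I-[z])P+[z]$ ($[z]$ the diagonal matrix with diagonal $z$) and $H(z)=\lim_{t\to\infty}W(z)^t$ (the limit exists and is row-stochastic). Let $\sigma_1^2,\dots,\sigma_n^2>0$. Agent $i$'s cost is $\upsilon_i(z)=\sum_jH_{ij}(z)^2\sigma_j^2$, and her best response set to $z_{-i}=(z_j)_{j\ne i}$ is $\mathcal B_i(z_{-i})=\arg\min_{z_i\in[0,1]}\upsilon_i(z_i,z_{-i})$ (always nonempty; a singleton or an interval). The asynchronous best response dynamics is the discrete-time Markov chain $Z(t)$ on $[0,1]^n$ in which, at each time $t=0,1,2,\dots$, an agent $k$ is chosen uniformly at random from $\mathcal V$, $Z_k(t+1)$ is drawn uniformly at random from $\mathcal B_k(Z_{-k}(t))$, and $Z_{-k}(t+1)=Z_{-k}(t)$. *)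

theory Defs
  imports "HOL-Probability.Probability"
begin

primrec matpow :: "real^'n^'n \<Rightarrow> nat \<Rightarrow> real^'n^'n" where
  "matpow A 0 = mat 1"
| "matpow A (Suc t) = matpow A t ** A"

definition row_stochastic :: "real^'n^'n \<Rightarrow> bool" where
  "row_stochastic P \<longleftrightarrow> (\<forall>i j. P $ i $ j \<ge> 0) \<and> (\<forall>i. (\<Sum>j\<in>UNIV. P $ i $ j) = 1)"

definition edges :: "real^'n^'n \<Rightarrow> ('n \<times> 'n) set" where
  "edges P = {(i, j). P $ i $ j > 0}"

definition irreducible_mat :: "real^'n^'n \<Rightarrow> bool" where
  "irreducible_mat P \<longleftrightarrow> (\<forall>i j. (i, j) \<in> (edges P)\<^sup>*)"

definition aperiodic_mat :: "real^'n^'n \<Rightarrow> bool" where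
  "aperiodic_mat P \<longleftrightarrow> Gcd {m. m > 0 \<and> (\<exists>i. (i, i) \<in> (edges P) ^^ m)} = (1::nat)"

definition diagm :: "real^'n \<Rightarrow> real^'n^'n" where
  "diagm z = (\<chi> i j. if i = j then z $ i else 0)"

definition Wmat :: "real^'n^'n \<Rightarrow> real^'n \<Rightarrow> real^'n^'n" where
  "Wmat P z = (mat 1 - diagm z) ** P + diagm z"

definition Hmat :: "real^'n^'n \<Rightarrow> real^'n \<Rightarrow> real^'n^'n" where
  "Hmat P z = lim (\<lambda>t. matpow (Wmat P z) t)"

definition cost :: "real^'n^'n \<Rightarrow> real^'n \<Rightarrow> 'n \<Rightarrow> real^'n \<Rightarrow> real" where
  "cost P \<sigma>2 i z = (\<Sum>j\<in>UNIV. (Hmat P z $ i $ j)\<^sup>2 * \<sigma>2 $ j)"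

definition upd :: "real^'n \<Rightarrow> 'n \<Rightarrow> real \<Rightarrow> real^'n" where
  "upd z k x = (\<chi> j. if j = k then x else z $ j)"

text \<open>Best response of agent i to z_{-i} (the i-th component of z is irrelevant).\<close>
definition best_resp :: "real^'n^'n \<Rightarrow> real^'n \<Rightarrow> 'n \<Rightarrow> real^'n \<Rightarrow> real set" where
  "best_resp P \<sigma>2 i z = {x \<in> {0..1}. \<forall>y\<in>{0..1}. cost P \<sigma>2 i (upd z i x) \<le> cost P \<sigma>2 i (upd z i y)}"

text \<open>Uniform distribution on a set: Dirac mass on a singleton, otherwise
  normalised Lebesgue measure (the set is then a nondegenerate interval).\<close>
definition unif :: "real set \<Rightarrow> real measure" where
  "unif S = (if \<exists>b. S = {b} then return borel (THE b. S = {b}) else uniform_measure lborel S)"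

definition br_kernel :: "real^'n^'n \<Rightarrow> real^'n \<Rightarrow> real^'n \<Rightarrow> (real^'n) set \<Rightarrow> ennreal" where
  "br_kernel P \<sigma>2 z A =
     (\<Sum>k\<in>UNIV. emeasure (unif (best_resp P \<sigma>2 k z)) {x. upd z k x \<in> A}) / of_nat CARD('n)"

text \<open>Z is a (discrete time) Markov chain on the probability space M with the above kernel
  (arbitrary initial law): finite dimensional distributions are given by the kernel.\<close>
definition is_br_dynamics :: "'a measure \<Rightarrow> real^'n^'n \<Rightarrow> real^'n \<Rightarrow> (nat \<Rightarrow> 'a \<Rightarrow> real^'n) \<Rightarrow> bool" where
  "is_br_dynamics M P \<sigma>2 Z \<longleftrightarrow>
     prob_space M \<and> (\<forall>t. Z t \<in> M \<rightarrow>\<^sub>M borel) \<and>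
     (\<forall>t (A :: nat \<Rightarrow> (real^'n) set). (\<forall>s. A s \<in> sets borel) \<longrightarrow>
        emeasure M {\<omega> \<in> space M. \<forall>s\<le>Suc t. Z s \<omega> \<in> A s} =
        (\<integral>\<^sup>+ \<omega>. indicator {\<omega> \<in> space M. \<forall>s\<le>t. Z s \<omega> \<in> A s} \<omega>
                   * br_kernel P \<sigma>2 (Z t \<omega>) (A (Suc t)) \<partial>M))"

end

theory Submission
  imports Defs
begin

lemma mat1_entry: "(mat 1 :: real^'n^'n) $ i $ j = (if i = j then 1 else 0)"
  by (simp add: mat_def)

lemma mmult_entry: "(A ** B) $ i $ j = (\<Sum>k\<in>UNIV. A $ i $ k * B $ k $ j)"
  by (simp add: matrix_matrix_mult_def)

lemma matpow_add: "matpow W (a + b) = matpow W a ** matpow W b"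
  by (induction b) (simp_all add: matrix_mul_assoc)

lemma matpow_1: "matpow W 1 = W"
  by (simp add: matrix_mul_lid)

lemma matpow_Suc': "matpow W (Suc t) = W ** matpow W t"
  using matpow_add[of W 1 t] by (simp add: matpow_1)

lemma stoch_mult:
  assumes "row_stochastic A" "row_stochastic B"
  shows "row_stochastic (A ** B)"
proof -
  have nn: "\<And>i j. 0 \<le> (A ** B) $ i $ j"
    using assms unfolding row_stochastic_def mmult_entry
    by (auto intro!: sum_nonneg mult_nonneg_nonneg)
  have "(\<Sum>j\<in>UNIV. (A ** B) $ i $ j) = 1" for i
  proof -
    have "(\<Sum>j\<in>UNIV. (A ** B) $ i $ j) = (\<Sum>k\<in>UNIV. \<Sum>j\<in>UNIV. A $ i $ k * B $ k $ j)"
      unfolding mmult_entry by (rule sum.swap)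
    also have "\<dots> = (\<Sum>k\<in>UNIV. A $ i $ k * (\<Sum>j\<in>UNIV. B $ k $ j))"
      by (simp add: sum_distrib_left)
    also have "\<dots> = 1" using assms unfolding row_stochastic_def by simp
    finally show ?thesis .
  qed
  then show ?thesis using nn unfolding row_stochastic_def by auto
qed

lemma stoch_id: "row_stochastic (mat 1 :: real^'n^'n)"
  unfolding row_stochastic_def mat1_entry by auto

lemma stoch_matpow: "row_stochastic W \<Longrightarrow> row_stochastic (matpow W t)"
  by (induction t) (auto intro: stoch_mult stoch_id)

lemma stoch_nonneg: "row_stochastic W \<Longrightarrow> 0 \<le> W $ i $ j"
  unfolding row_stochastic_def by auto

lemma stoch_sum: "row_stochastic W \<Longrightarrow> (\<Sum>j\<in>UNIV. W $ i $ j) = 1"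
  unfolding row_stochastic_def by auto

lemma stoch_le1: "row_stochastic W \<Longrightarrow> W $ i $ j \<le> 1"
proof -
  assume W: "row_stochastic W"
  have "W $ i $ j \<le> (\<Sum>j\<in>UNIV. W $ i $ j)"
    by (rule member_le_sum) (auto intro: stoch_nonneg[OF W])
  then show ?thesis using stoch_sum[OF W] by simp
qed

lemma mmult_ge_term:
  assumes "row_stochastic A" "row_stochastic B"
  shows "A $ i $ k * B $ k $ j \<le> (A ** B) $ i $ j"
  unfolding mmult_entry
  by (rule member_le_sum[where f="\<lambda>k. A $ i $ k * B $ k $ j"])
     (auto intro!: mult_nonneg_nonneg stoch_nonneg assms)

lemma relpow_pos:
  assumes W: "row_stochastic W"
  shows "((i, j) \<in> edges W ^^ m) \<longleftrightarrow> matpow W m $ i $ j > 0"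
proof (induction m arbitrary: j)
  case 0
  then show ?case by (simp add: mat1_entry)
next
  case (Suc m)
  have "((i, j) \<in> edges W ^^ Suc m) \<longleftrightarrow> (\<exists>k. (i,k) \<in> edges W ^^ m \<and> W $ k $ j > 0)"
    by (auto simp: edges_def)
  also have "\<dots> \<longleftrightarrow> (\<exists>k. matpow W m $ i $ k * W $ k $ j > 0)"
    using Suc.IH stoch_nonneg[OF stoch_matpow[OF W]] stoch_nonneg[OF W]
    by (metis less_eq_real_def mult_eq_0_iff mult_pos_pos)
  also have "\<dots> \<longleftrightarrow> matpow W (Suc m) $ i $ j > 0"
  proof -
    have "(\<Sum>k\<in>UNIV. matpow W m $ i $ k * W $ k $ j) > 0 \<longleftrightarrow>
          (\<exists>k\<in>UNIV. matpow W m $ i $ k * W $ k $ j > 0)"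
      using sum_nonneg_eq_0_iff[of UNIV "\<lambda>k. matpow W m $ i $ k * W $ k $ j"]
        stoch_nonneg[OF stoch_matpow[OF W]] stoch_nonneg[OF W]
      by (smt (verit, best) finite mult_nonneg_nonneg sum_nonneg)
    then show ?thesis by (simp add: mmult_entry)
  qed
  finally show ?case .
qed


lemma semigroup_mult_mem:
  fixes A :: "nat set" and k :: nat
  assumes add: "\<And>a b. a \<in> A \<Longrightarrow> b \<in> A \<Longrightarrow> a + b \<in> A" and a: "a \<in> A"
  shows "k \<ge> 1 \<Longrightarrow> k * a \<in> A"
proof (induction k)
  case 0 then show ?case by simp
next
  case (Suc k)
  then show ?case
    by (cases "k = 0") (auto simp: a add)
qed

lemma semigroup_cofinite:
  fixes A :: "nat set"
  assumes add: "\<And>a b. a \<in> A \<Longrightarrow> b \<in> A \<Longrightarrow> a + b \<in> A"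
    and nz: "0 \<notin> A" and ne: "A \<noteq> {}" and g: "Gcd A = 1"
  shows "\<exists>t0. \<forall>t\<ge>t0. t \<in> A"
proof -
  define D where "D = {d. d > 0 \<and> (\<exists>b\<in>A. b + d \<in> A)}"
  obtain a0 where a0: "a0 \<in> A" using ne by auto
  have a0pos: "a0 > 0" using a0 nz by (cases a0) auto
  have "a0 \<in> D" using a0 a0pos add[OF a0 a0] unfolding D_def by auto
  define \<delta> where "\<delta> = (LEAST d. d \<in> D)"
  have \<delta>D: "\<delta> \<in> D" unfolding \<delta>_def by (rule LeastI) fact
  have \<delta>min: "\<And>d. d \<in> D \<Longrightarrow> \<delta> \<le> d" unfolding \<delta>_def by (rule Least_le)
  obtain b where b: "b \<in> A" "b + \<delta> \<in> A" "\<delta> > 0" using \<delta>D unfolding D_def by auto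
  have dv: "\<delta> dvd a" if aA: "a \<in> A" for a
  proof (rule ccontr)
    assume nd: "\<not> \<delta> dvd a"
    define q r where "q = a div \<delta>" "r = a mod \<delta>"
    have r: "r > 0" "r < \<delta>" using nd b(3) unfolding q_r_def
      by (auto simp: mod_greater_zero_iff_not_dvd)
    have aeq: "a = q * \<delta> + r" unfolding q_r_def by simp
    have X: "a + (q + 1) * b \<in> A"
      using add[OF aA semigroup_mult_mem[OF add b(1), of "q+1"]] by simp
    have Y: "(if q = 0 then b else q * (b + \<delta>) + b) \<in> A"
      using b(1) add[OF semigroup_mult_mem[OF add b(2), of q] b(1)] by auto
    have "a + (q + 1) * b = (if q = 0 then b else q * (b + \<delta>) + b) + r"
      using aeq by (auto simp: algebra_simps)
    then have "r \<in> D" using X Y r unfolding D_def by auto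
    then show False using \<delta>min r by fastforce
  qed
  have "\<delta> dvd Gcd A" by (rule Gcd_greatest) (use dv in auto)
  then have "\<delta> = 1" using g by simp
  then have b1: "b + 1 \<in> A" using b by simp
  have bpos: "b > 0" using b(1) nz by (cases b) auto
  show ?thesis
  proof (intro exI allI impI)
    fix t assume t: "b * b \<le> t"
    define q r where "q = t div b" "r = t mod b"
    have teq: "t = q * b + r" unfolding q_r_def by simp
    have rb: "r < b" unfolding q_r_def using bpos by simp
    have qb: "q \<ge> b"
    proof (rule ccontr)
      assume "\<not> q \<ge> b"
      then have "q + 1 \<le> b" by simp
      then have "(q + 1) * b \<le> b * b" by (rule mult_le_mono1)
      then show False using teq rb t by (simp add: algebra_simps)
    qed
    have t2: "t = (q - r) * b + r * (b + 1)"
      using teq qb rb by (simp add: algebra_simps diff_mult_distrib)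
    have m1: "(q - r) * b \<in> A" using semigroup_mult_mem[OF add b(1), of "q - r"] qb rb by simp
    show "t \<in> A"
    proof (cases "r = 0")
      case True then show ?thesis using m1 t2 by simp
    next
      case False
      then have "r * (b + 1) \<in> A" using semigroup_mult_mem[OF add b1, of r] by simp
      then show ?thesis using add[OF m1] t2 by simp
    qed
  qed
qed


lemma relpow_comp: "(a, b) \<in> R ^^ m \<Longrightarrow> (b, c) \<in> R ^^ k \<Longrightarrow> (a, c) \<in> R ^^ (m + k)"
  by (auto simp: relpow_add)

lemma aperiodic_column:
  fixes W :: "real^'n^'n"
  assumes irr: "irreducible_mat W" and ap: "aperiodic_mat W"
  shows "\<exists>M. \<forall>j. (j, r) \<in> edges W ^^ M"
proof -
  define E where "E = edges W"
  define L where "L = {m. m > 0 \<and> (\<exists>i. (i, i) \<in> E ^^ m)}"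
  define Lr where "Lr = {m. m > 0 \<and> (r, r) \<in> E ^^ m}"
  have gL: "Gcd L = 1" using ap unfolding aperiodic_mat_def L_def E_def by simp
  have reach: "\<And>x y. \<exists>p. (x, y) \<in> E ^^ p"
    using irr unfolding irreducible_mat_def E_def by (metis rtrancl_power)
  have Lne: "L \<noteq> {}" using gL by auto
  then obtain m0 i0 where m0: "m0 > 0" "(i0, i0) \<in> E ^^ m0" unfolding L_def by auto
  have closed: "a + b \<in> Lr" if "a \<in> Lr" "b \<in> Lr" for a b
    using that relpow_comp[where a=r and b=r and c=r and R=E and m=a and k=b] unfolding Lr_def by auto
  have nz: "0 \<notin> Lr" unfolding Lr_def by auto
  have div: "Gcd Lr dvd m" if mL: "m \<in> L" for m
  proof -
    obtain i where i: "m > 0" "(i, i) \<in> E ^^ m" using mL unfolding L_def by auto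
    obtain p q where p: "(r, i) \<in> E ^^ p" and q: "(i, r) \<in> E ^^ q" using reach by blast
    have c: "(r, r) \<in> E ^^ (p + q)" using relpow_comp[OF p q] .
    have cm: "(r, r) \<in> E ^^ (p + q + m)"
      using relpow_comp[OF relpow_comp[OF p i(2)] q] by (simp add: add_ac)
    have cmL: "p + q + m \<in> Lr" using cm i(1) unfolding Lr_def by auto
    show ?thesis
    proof (cases "p + q = 0")
      case True then show ?thesis using cmL by (simp add: Gcd_dvd)
    next
      case False
      then have "p + q \<in> Lr" using c unfolding Lr_def by auto
      then have "Gcd Lr dvd p + q" by (rule Gcd_dvd)
      moreover have "Gcd Lr dvd p + q + m" using cmL by (rule Gcd_dvd)
      ultimately show ?thesis by (simp add: dvd_add_right_iff)
    qed
  qed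
  have "Gcd Lr dvd Gcd L" by (rule Gcd_greatest) (use div in auto)
  then have gLr: "Gcd Lr = 1" using gL by simp
  have Lrne: "Lr \<noteq> {}"
  proof -
    obtain p q where p: "(r, i0) \<in> E ^^ p" and q: "(i0, r) \<in> E ^^ q" using reach by blast
    have "(r, r) \<in> E ^^ (p + m0 + q)" using relpow_comp[OF relpow_comp[OF p m0(2)] q] .
    then have "p + m0 + q \<in> Lr" using m0 unfolding Lr_def by auto
    then show ?thesis by auto
  qed
  obtain t0 where t0: "\<And>t. t \<ge> t0 \<Longrightarrow> t \<in> Lr"
    using semigroup_cofinite[OF closed nz Lrne gLr] by blast
  have "\<forall>j. \<exists>d. (j, r) \<in> E ^^ d" using reach by blast
  then obtain d where d: "\<And>j. (j, r) \<in> E ^^ d j" by metis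
  define M where "M = t0 + Max (range d)"
  have "(j, r) \<in> E ^^ M" for j
  proof -
    have dj: "d j \<le> Max (range d)" by (rule Max_ge) auto
    have "M - d j \<ge> t0" using dj unfolding M_def by linarith
    then have "M - d j \<in> Lr" using t0 by blast
    then have "(r, r) \<in> E ^^ (M - d j)" unfolding Lr_def by auto
    from relpow_comp[OF d[of j] this] show ?thesis using dj unfolding M_def by simp
  qed
  then show ?thesis unfolding E_def by blast
qed

lemma doeblin_cond:
  fixes W :: "real^'n^'n"
  assumes W: "row_stochastic W" and irr: "irreducible_mat W" and ap: "aperiodic_mat W"
  shows "\<exists>M \<delta>. \<delta> > 0 \<and> (\<forall>j. matpow W M $ j $ r \<ge> \<delta>)"
proof -
  obtain M where M: "\<And>j. (j, r) \<in> edges W ^^ M" using aperiodic_column[OF irr ap] by blast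
  have pos: "\<And>j. matpow W M $ j $ r > 0" using M relpow_pos[OF W] by blast
  define \<delta> where "\<delta> = Min (range (\<lambda>j. matpow W M $ j $ r))"
  have "\<delta> \<in> range (\<lambda>j. matpow W M $ j $ r)" unfolding \<delta>_def by (rule Min_in) auto
  then have "\<delta> > 0" using pos by auto
  moreover have "\<forall>j. matpow W M $ j $ r \<ge> \<delta>" unfolding \<delta>_def by (auto intro: Min_le)
  ultimately show ?thesis by blast
qed


lemma dec_to_zero:
  fixes a :: "nat \<Rightarrow> real"
  assumes dec: "decseq a" and nn: "\<And>t. a t \<ge> 0" and b: "\<And>k. a (k * M) \<le> c ^ k"
    and c: "0 \<le> c" "c < 1"
  shows "a \<longlonglongrightarrow> 0"
proof -
  obtain U where U: "a \<longlonglongrightarrow> U" "\<And>i. U \<le> a i"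
    using decseq_convergent[OF dec, of 0] nn by blast
  have "U \<le> c ^ k" for k using U(2)[of "k * M"] b[of k] by linarith
  then have "U \<le> 0"
    using LIMSEQ_power_zero[of c] c by (intro LIMSEQ_le_const[of "\<lambda>k. c ^ k"]) auto
  moreover have "U \<ge> 0" using U(1) nn by (intro LIMSEQ_le_const[of a]) auto
  ultimately show ?thesis using U(1) by simp
qed

lemma conv_upper:
  fixes x f :: "'n::finite \<Rightarrow> real"
  assumes x: "\<And>p. x p \<ge> 0" "sum x UNIV = 1" and r: "x r \<ge> \<delta>" and f: "\<And>p. f p \<le> a"
  shows "(\<Sum>p\<in>UNIV. x p * f p) \<le> a + \<delta> * (f r - a)"
proof -
  have "(\<Sum>p\<in>UNIV. x p * (f p - a)) = (\<Sum>p\<in>UNIV. x p * f p) - a * sum x UNIV"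
    by (simp add: algebra_simps sum_subtractf sum_distrib_left)
  then have "(\<Sum>p\<in>UNIV. x p * f p) = (\<Sum>p\<in>UNIV. x p * (f p - a)) + a"
    using x(2) by simp
  also have "(\<Sum>p\<in>UNIV. x p * (f p - a)) = x r * (f r - a) + (\<Sum>p\<in>UNIV - {r}. x p * (f p - a))"
    by (simp add: sum.remove)
  also have "(\<Sum>p\<in>UNIV - {r}. x p * (f p - a)) \<le> 0"
    by (intro sum_nonpos) (simp add: mult_nonneg_nonpos x f)
  also have "x r * (f r - a) \<le> \<delta> * (f r - a)"
    using r f[of r] by (simp add: mult_right_mono_neg)
  finally show ?thesis by simp
qed

lemma conv_lower:
  fixes x f :: "'n::finite \<Rightarrow> real"
  assumes x: "\<And>p. x p \<ge> 0" "sum x UNIV = 1" and r: "x r \<ge> \<delta>" and f: "\<And>p. b \<le> f p"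
  shows "(\<Sum>p\<in>UNIV. x p * f p) \<ge> b + \<delta> * (f r - b)"
proof -
  have "(\<Sum>p\<in>UNIV. x p * (- f p)) \<le> (- b) + \<delta> * ((- f r) - (- b))"
    by (rule conv_upper[OF x r]) (use f in auto)
  then show ?thesis by (simp add: sum_negf algebra_simps)
qed

lemma conv_bounds:
  fixes x f :: "'n::finite \<Rightarrow> real"
  assumes x: "\<And>p. x p \<ge> 0" "sum x UNIV = 1" and f: "\<And>p. b \<le> f p" "\<And>p. f p \<le> a"
  shows "(\<Sum>p\<in>UNIV. x p * f p) \<le> a" "(\<Sum>p\<in>UNIV. x p * f p) \<ge> b"
  using conv_upper[OF x _ f(2), of 0 undefined] conv_lower[OF x _ f(1), of 0 undefined] x(1)
  by auto

lemma stoch_row: "row_stochastic W \<Longrightarrow> (\<forall>p. W $ j $ p \<ge> 0) \<and> sum (\<lambda>p. W $ j $ p) UNIV = 1"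
  unfolding row_stochastic_def by auto

lemma doeblin_conv:
  fixes W :: "real^'n^'n"
  assumes W: "row_stochastic W" and dpos: "\<delta> > 0" and col: "\<And>j. matpow W M $ j $ r \<ge> \<delta>"
  shows "\<exists>\<pi>. \<forall>j l. (\<lambda>t. matpow W t $ j $ l) \<longlonglongrightarrow> \<pi> $ l"
proof -
  have "\<exists>A. \<forall>j. (\<lambda>t. matpow W t $ j $ l) \<longlonglongrightarrow> A" for l
  proof -
    define f where "f t j = matpow W t $ j $ l" for t j
    define a where "a t = Max (range (f t))" for t
    define b where "b t = Min (range (f t))" for t
    have fa: "f t j \<le> a t" for t j unfolding a_def by (rule Max_ge) auto
    have fb: "b t \<le> f t j" for t j unfolding b_def by (rule Min_le) auto
    have ain: "\<exists>j. a t = f t j" for t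
    proof -
      have "a t \<in> range (f t)" unfolding a_def by (rule Max_in) auto
      then show ?thesis by auto
    qed
    have bin: "\<exists>j. b t = f t j" for t
    proof -
      have "b t \<in> range (f t)" unfolding b_def by (rule Min_in) auto
      then show ?thesis by auto
    qed
    have fM: "f (M + t) j = (\<Sum>p\<in>UNIV. matpow W M $ j $ p * f t p)" for t j
      unfolding f_def matpow_add mmult_entry ..
    have f1: "f (Suc t) j = (\<Sum>p\<in>UNIV. W $ j $ p * f t p)" for t j
      unfolding f_def matpow_Suc' mmult_entry ..
    have WM: "\<And>j. (\<forall>p. matpow W M $ j $ p \<ge> 0) \<and> sum (\<lambda>p. matpow W M $ j $ p) UNIV = 1"
      using stoch_row[OF stoch_matpow[OF W]] by blast
    have W1: "\<And>j. (\<forall>p. W $ j $ p \<ge> 0) \<and> sum (\<lambda>p. W $ j $ p) UNIV = 1"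
      using stoch_row[OF W] by blast
    have adec: "decseq a"
    proof (rule decseq_SucI)
      fix t
      obtain j where "a (Suc t) = f (Suc t) j" using ain by blast
      also have "\<dots> \<le> a t" unfolding f1 using W1[of j]
        by (intro conv_bounds(1)[where b="b t"]) (auto intro: fa fb)
      finally show "a (Suc t) \<le> a t" .
    qed
    have binc: "incseq b"
    proof (rule incseq_SucI)
      fix t
      obtain j where "b (Suc t) = f (Suc t) j" using bin by blast
      moreover have "f (Suc t) j \<ge> b t" unfolding f1 using W1[of j]
        by (intro conv_bounds(2)[where a="a t"]) (auto intro: fa fb)
      ultimately show "b t \<le> b (Suc t)" by simp
    qed
    have contr: "a (M + t) - b (M + t) \<le> (1 - \<delta>) * (a t - b t)" for t
    proof -
      obtain j1 where j1: "a (M + t) = f (M + t) j1" using ain by blast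
      obtain j2 where j2: "b (M + t) = f (M + t) j2" using bin by blast
      have u: "f (M + t) j1 \<le> a t + \<delta> * (f t r - a t)"
        unfolding fM using WM[of j1] col[of j1] by (intro conv_upper) (auto intro: fa)
      have l: "f (M + t) j2 \<ge> b t + \<delta> * (f t r - b t)"
        unfolding fM using WM[of j2] col[of j2] by (intro conv_lower) (auto intro: fb)
      show ?thesis using u l j1 j2 by (simp add: algebra_simps)
    qed
    have d0: "a 0 - b 0 \<le> 1"
    proof -
      obtain j1 where "a 0 = f 0 j1" using ain by blast
      moreover obtain j2 where "b 0 = f 0 j2" using bin by blast
      ultimately show ?thesis unfolding f_def by (simp add: mat1_entry)
    qed
    have dle1: "\<delta> \<le> 1" using col[of r] stoch_le1[OF stoch_matpow[OF W]] by (meson order_trans)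
    have dk: "a (k * M) - b (k * M) \<le> (1 - \<delta>) ^ k" for k
    proof (induction k)
      case 0 then show ?case using d0 by simp
    next
      case (Suc k)
      have "a (Suc k * M) - b (Suc k * M) \<le> (1 - \<delta>) * (a (k * M) - b (k * M))"
        using contr[of "k * M"] by (simp add: add.commute)
      also have "\<dots> \<le> (1 - \<delta>) * (1 - \<delta>) ^ k"
        using Suc.IH dle1 by (intro mult_left_mono) auto
      finally show ?case by simp
    qed
    have dnn: "\<And>t. a t - b t \<ge> 0" using fa fb by (meson diff_ge_0_iff_ge order_trans)
    have ddec: "decseq (\<lambda>t. a t - b t)"
      using adec binc unfolding decseq_def incseq_def by (meson diff_mono)
    have dlim: "(\<lambda>t. a t - b t) \<longlonglongrightarrow> 0"
      by (rule dec_to_zero[OF ddec dnn dk]) (use dpos dle1 in auto)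
    have anyf: "0 \<le> f t j" for t j unfolding f_def by (rule stoch_nonneg[OF stoch_matpow[OF W]])
    obtain A where A: "a \<longlonglongrightarrow> A" using decseq_convergent[OF adec, of 0] fa anyf
      by (meson order_trans)
    have B: "b \<longlonglongrightarrow> A" using tendsto_diff[OF A dlim] by simp
    have "(\<lambda>t. f t j) \<longlonglongrightarrow> A" for j
      by (rule tendsto_sandwich[OF _ _ B A]) (auto intro!: always_eventually fa fb)
    then show ?thesis unfolding f_def by blast
  qed
  then obtain A where "\<And>l j. (\<lambda>t. matpow W t $ j $ l) \<longlonglongrightarrow> A l" by metis
  then show ?thesis by (intro exI[of _ "\<chi> l. A l"]) simp
qed


lemma absorbing_row:
  assumes W: "row_stochastic W" and k: "W $ k $ k = 1"
  shows "W $ k $ l = (if l = k then 1 else 0)"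
proof -
  have "(\<Sum>l\<in>UNIV. W $ k $ l) = W $ k $ k + (\<Sum>l\<in>UNIV - {k}. W $ k $ l)"
    by (simp add: sum.remove)
  then have "(\<Sum>l\<in>UNIV - {k}. W $ k $ l) = 0" using stoch_sum[OF W] k by simp
  then have "\<forall>l\<in>UNIV - {k}. W $ k $ l = 0"
    using sum_nonneg_eq_0_iff[of "UNIV - {k}" "\<lambda>l. W $ k $ l"] stoch_nonneg[OF W] by auto
  then show ?thesis using k by auto
qed

lemma absorbing_matpow_row:
  assumes W: "row_stochastic W" and k: "W $ k $ k = 1"
  shows "matpow W t $ k $ l = (if l = k then 1 else 0)"
proof (induction t arbitrary: l)
  case 0 then show ?case by (simp add: mat1_entry)
next
  case (Suc t)
  have "matpow W (Suc t) $ k $ l = (\<Sum>q\<in>UNIV. (if q = k then 1 else 0) * W $ q $ l)"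
    by (simp add: mmult_entry Suc.IH)
  also have "\<dots> = (\<Sum>q\<in>UNIV. if q = k then W $ q $ l else 0)"
    by (intro sum.cong) auto
  also have "\<dots> = W $ k $ l" by simp
  finally show ?case using absorbing_row[OF W k] by simp
qed

lemma absorbing_incr:
  assumes W: "row_stochastic W" and l: "W $ l $ l = 1"
  shows "incseq (\<lambda>t. matpow W t $ j $ l)"
proof (rule incseq_SucI)
  fix t
  have "matpow W t $ j $ l * W $ l $ l \<le> (matpow W t ** W) $ j $ l"
    by (rule mmult_ge_term[OF stoch_matpow[OF W] W])
  then show "matpow W t $ j $ l \<le> matpow W (Suc t) $ j $ l" using l by simp
qed

lemma absorb_conv:
  fixes W :: "real^'n^'n" and S :: "'n set"
  assumes W: "row_stochastic W" and abs: "\<And>k. k \<in> S \<Longrightarrow> W $ k $ k = 1"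
    and reach: "\<And>j. \<exists>k\<in>S. \<exists>m. matpow W m $ j $ k > 0"
  shows "\<exists>L. (\<forall>j l. (\<lambda>t. matpow W t $ j $ l) \<longlonglongrightarrow> L $ j $ l) \<and> (\<forall>j l. l \<notin> S \<longrightarrow> L $ j $ l = 0)"
proof -
  have Wt: "\<And>t. row_stochastic (matpow W t)" using stoch_matpow[OF W] .
  obtain kk mm where kk: "\<And>j. kk j \<in> S" "\<And>j. matpow W (mm j) $ j $ kk j > 0"
    using reach by metis
  define M where "M = Max (range mm)"
  have mmM: "mm j \<le> M" for j unfolding M_def by (rule Max_ge) auto
  have posM: "matpow W M $ j $ kk j > 0" for j
    using kk(2)[of j] absorbing_incr[OF W abs[OF kk(1)], of j] mmM[of j]
    unfolding incseq_def by (meson less_le_trans)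
  define \<delta> where "\<delta> = Min (range (\<lambda>j. matpow W M $ j $ kk j))"
  have "\<delta> \<in> range (\<lambda>j. matpow W M $ j $ kk j)" unfolding \<delta>_def by (rule Min_in) auto
  then have dpos: "\<delta> > 0" using posM by auto
  have dle: "\<delta> \<le> matpow W M $ j $ kk j" for j unfolding \<delta>_def by (rule Min_le) auto
  define u where "u t j = (\<Sum>l\<in>-S. matpow W t $ j $ l)" for t j
  have usplit: "u t j = 1 - (\<Sum>l\<in>S. matpow W t $ j $ l)" for t j
  proof -
    have "(\<Sum>l\<in>UNIV. matpow W t $ j $ l) = (\<Sum>l\<in>S. matpow W t $ j $ l) + (\<Sum>l\<in>-S. matpow W t $ j $ l)"
      using sum.union_disjoint[of S "-S" "\<lambda>l. matpow W t $ j $ l"] by (simp add: Un_commute)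
    then show ?thesis unfolding u_def using stoch_sum[OF Wt] by simp
  qed
  have unn: "u t j \<ge> 0" for t j unfolding u_def by (intro sum_nonneg stoch_nonneg[OF Wt])
  have udec: "decseq (\<lambda>t. u t j)" for j
    unfolding decseq_def usplit
    using absorbing_incr[OF W abs] unfolding incseq_def by (auto intro!: sum_mono)
  have uS: "u t p = 0" if "p \<in> S" for t p
    unfolding u_def using absorbing_matpow_row[OF W abs[OF that]] that by auto
  have uM: "u M j \<le> 1 - \<delta>" for j
  proof -
    have "matpow W M $ j $ kk j \<le> (\<Sum>l\<in>S. matpow W M $ j $ l)"
      by (rule member_le_sum) (auto intro: kk(1) stoch_nonneg[OF Wt])
    then show ?thesis using dle[of j] usplit by simp
  qed
  have uMt: "u (M + t) j = (\<Sum>p\<in>-S. matpow W M $ j $ p * u t p)" for t j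
  proof -
    have "u (M + t) j = (\<Sum>l\<in>-S. \<Sum>p\<in>UNIV. matpow W M $ j $ p * matpow W t $ p $ l)"
      unfolding u_def matpow_add mmult_entry ..
    also have "\<dots> = (\<Sum>p\<in>UNIV. matpow W M $ j $ p * u t p)"
      unfolding u_def by (subst sum.swap) (simp add: sum_distrib_left)
    also have "\<dots> = (\<Sum>p\<in>-S. matpow W M $ j $ p * u t p)"
      using uS by (intro sum.mono_neutral_right) auto
    finally show ?thesis .
  qed
  have ule1: "u t j \<le> 1" for t j
    using usplit[of t j] by (smt (verit) Wt stoch_nonneg sum_nonneg)
  have uk: "u (k * M) j \<le> (1 - \<delta>) ^ k" for k j
  proof (induction k arbitrary: j)
    case 0
    then show ?case using ule1 by simp
  next
    case (Suc k)
    have "u (Suc k * M) j = (\<Sum>p\<in>-S. matpow W M $ j $ p * u (k * M) p)"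
      using uMt[of "k * M" j] by (simp add: add.commute)
    also have "\<dots> \<le> (\<Sum>p\<in>-S. matpow W M $ j $ p * (1 - \<delta>) ^ k)"
      by (intro sum_mono mult_left_mono Suc.IH stoch_nonneg[OF Wt])
    also have "\<dots> = u M j * (1 - \<delta>) ^ k" unfolding u_def by (simp add: sum_distrib_right)
    also have "\<dots> \<le> (1 - \<delta>) * (1 - \<delta>) ^ k"
      by (intro mult_right_mono uM) (use uM[of j] unn[of M j] in auto)
    finally show ?case by simp
  qed
  have dle1: "\<delta> \<le> 1" using dle[of undefined] stoch_le1[OF Wt] by (meson order_trans)
  have ulim: "(\<lambda>t. u t j) \<longlonglongrightarrow> 0" for j
    by (rule dec_to_zero[OF udec unn uk]) (use dpos dle1 in auto)
  have lim0: "(\<lambda>t. matpow W t $ j $ l) \<longlonglongrightarrow> 0" if "l \<notin> S" for j l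
  proof (rule tendsto_sandwich[OF _ _ tendsto_const ulim[of j]])
    show "\<forall>\<^sub>F t in sequentially. 0 \<le> matpow W t $ j $ l"
      by (intro always_eventually allI stoch_nonneg[OF Wt])
    show "\<forall>\<^sub>F t in sequentially. matpow W t $ j $ l \<le> u t j"
      unfolding u_def using that
      by (intro always_eventually allI member_le_sum) (auto intro: stoch_nonneg[OF Wt])
  qed
  have limS: "\<exists>A. (\<lambda>t. matpow W t $ j $ l) \<longlonglongrightarrow> A" if "l \<in> S" for j l
    using incseq_convergent[OF absorbing_incr[OF W abs[OF that]], where B=1] stoch_le1[OF Wt] by metis
  have "\<forall>j l. \<exists>A. (\<lambda>t. matpow W t $ j $ l) \<longlonglongrightarrow> A \<and> (l \<notin> S \<longrightarrow> A = 0)"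
    using lim0 limS by metis
  then obtain A where A: "\<And>j l. (\<lambda>t. matpow W t $ j $ l) \<longlonglongrightarrow> A j l" "\<And>j l. l \<notin> S \<Longrightarrow> A j l = 0"
    by metis
  show ?thesis by (intro exI[of _ "\<chi> j l. A j l"]) (simp add: A)
qed


definition dom01 :: "real^'n \<Rightarrow> bool" where
  "dom01 z \<longleftrightarrow> (\<forall>i. 0 \<le> z $ i \<and> z $ i \<le> 1)"

lemma Wmat_entry: "Wmat P z $ i $ j = (1 - z $ i) * P $ i $ j + (if i = j then z $ i else 0)"
proof -
  have "((mat 1 - diagm z) ** P) $ i $ j = (\<Sum>k\<in>UNIV. (if k = i then (1 - z $ i) * P $ k $ j else 0))"
    unfolding mmult_entry by (intro sum.cong) (auto simp: diagm_def mat1_entry)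
  then show ?thesis unfolding Wmat_def by (simp add: diagm_def)
qed

lemma Wmat_stoch:
  assumes P: "row_stochastic P" and z: "dom01 z"
  shows "row_stochastic (Wmat P z)"
proof -
  have nn: "0 \<le> Wmat P z $ i $ j" for i j
    using z stoch_nonneg[OF P, of i j] unfolding Wmat_entry dom01_def by auto
  have "(\<Sum>j\<in>UNIV. Wmat P z $ i $ j) = 1" for i
  proof -
    have "(\<Sum>j\<in>UNIV. Wmat P z $ i $ j) = (1 - z $ i) * (\<Sum>j\<in>UNIV. P $ i $ j) + z $ i"
      unfolding Wmat_entry by (simp add: sum.distrib sum_distrib_left)
    then show ?thesis using stoch_sum[OF P] by simp
  qed
  then show ?thesis using nn unfolding row_stochastic_def by auto
qed

lemma edges_Wmat:
  assumes P: "row_stochastic P" and z: "dom01 z" and i: "z $ i < 1" and e: "(i, j) \<in> edges P"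
  shows "(i, j) \<in> edges (Wmat P z)"
proof -
  have "0 < (1 - z $ i) * P $ i $ j" using i e by (simp add: edges_def)
  moreover have "0 \<le> (if i = j then z $ i else 0)" using z unfolding dom01_def by auto
  ultimately show ?thesis unfolding edges_def Wmat_entry by auto
qed

lemma relpow_mono': "(R :: ('a \<times> 'a) set) \<subseteq> R' \<Longrightarrow> R ^^ n \<subseteq> R' ^^ n"
  by (induction n) (simp_all add: relcomp_mono)

lemma irred_aper_Wmat:
  assumes P: "row_stochastic P" and irr: "irreducible_mat P" and ap: "aperiodic_mat P"
    and z: "dom01 z" and zl: "\<And>i. z $ i < 1"
  shows "irreducible_mat (Wmat P z)" "aperiodic_mat (Wmat P z)"
proof -
  have sub: "edges P \<subseteq> edges (Wmat P z)" using edges_Wmat[OF P z zl] by auto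
  show "irreducible_mat (Wmat P z)"
    using irr rtrancl_mono[OF sub] unfolding irreducible_mat_def by blast
  define LP where "LP = {m. m > 0 \<and> (\<exists>i. (i, i) \<in> (edges P) ^^ m)}"
  define LW where "LW = {m. m > 0 \<and> (\<exists>i. (i, i) \<in> (edges (Wmat P z)) ^^ m)}"
  have "LP \<subseteq> LW" unfolding LP_def LW_def using relpow_mono'[OF sub] by blast
  then have "Gcd LW dvd Gcd LP" by (meson Gcd_dvd Gcd_greatest subsetD)
  then show "aperiodic_mat (Wmat P z)"
    using ap unfolding aperiodic_mat_def LP_def LW_def by simp
qed

lemma lim_mat:
  fixes L :: "real^'n^'n"
  assumes "\<And>j l. (\<lambda>t. X t $ j $ l) \<longlonglongrightarrow> L $ j $ l"
  shows "X \<longlonglongrightarrow> L"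
  by (intro vec_tendstoI) (use assms in auto)

lemma Hmat_eq:
  assumes "\<And>j l. (\<lambda>t. matpow (Wmat P z) t $ j $ l) \<longlonglongrightarrow> L $ j $ l"
  shows "Hmat P z = L"
  unfolding Hmat_def by (rule limI, rule lim_mat) (use assms in auto)

lemma limit_fixed:
  assumes "\<And>j l. (\<lambda>t. matpow W t $ j $ l) \<longlonglongrightarrow> L $ j $ l"
  shows "L $ j $ l = (\<Sum>p\<in>UNIV. W $ j $ p * L $ p $ l)"
proof -
  have "(\<lambda>t. matpow W (Suc t) $ j $ l) \<longlonglongrightarrow> (\<Sum>p\<in>UNIV. W $ j $ p * L $ p $ l)"
    unfolding matpow_Suc' mmult_entry by (intro tendsto_intros assms)
  moreover have "(\<lambda>t. matpow W (Suc t) $ j $ l) \<longlonglongrightarrow> L $ j $ l" by (rule LIMSEQ_Suc[OF assms])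
  ultimately show ?thesis using LIMSEQ_unique by blast
qed

lemma limit_stoch:
  assumes W: "row_stochastic W" and lim: "\<And>j l. (\<lambda>t. matpow W t $ j $ l) \<longlonglongrightarrow> L $ j $ l"
  shows "row_stochastic L"
proof -
  have nn: "0 \<le> L $ j $ l" for j l
    by (rule LIMSEQ_le_const[OF lim]) (auto intro: stoch_nonneg[OF stoch_matpow[OF W]])
  have "(\<lambda>t. \<Sum>l\<in>UNIV. matpow W t $ j $ l) \<longlonglongrightarrow> (\<Sum>l\<in>UNIV. L $ j $ l)" for j
    by (intro tendsto_intros lim)
  then have "(\<Sum>l\<in>UNIV. L $ j $ l) = 1" for j
    using stoch_sum[OF stoch_matpow[OF W]] by (simp add: LIMSEQ_const_iff)
  then show ?thesis using nn unfolding row_stochastic_def by auto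
qed

lemma stationary_iter:
  assumes st: "\<And>l. (\<Sum>j\<in>UNIV. \<nu> $ j * W $ j $ l) = \<nu> $ l"
  shows "(\<Sum>j\<in>UNIV. \<nu> $ j * matpow W m $ j $ l) = \<nu> $ l"
proof (induction m arbitrary: l)
  case 0 then show ?case by (simp add: mat1_entry if_distrib cong: if_cong)
next
  case (Suc m)
  have "(\<Sum>j\<in>UNIV. \<nu> $ j * matpow W (Suc m) $ j $ l)
      = (\<Sum>j\<in>UNIV. \<Sum>p\<in>UNIV. \<nu> $ j * (matpow W m $ j $ p * W $ p $ l))"
    by (simp add: mmult_entry sum_distrib_left)
  also have "\<dots> = (\<Sum>p\<in>UNIV. (\<Sum>j\<in>UNIV. \<nu> $ j * matpow W m $ j $ p) * W $ p $ l)"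
    by (subst sum.swap) (simp add: sum_distrib_right mult.assoc)
  also have "\<dots> = \<nu> $ l" using Suc.IH st by simp
  finally show ?case .
qed

lemma stationary_P:
  fixes P :: "real^'n^'n"
  assumes P: "row_stochastic P" and irr: "irreducible_mat P" and ap: "aperiodic_mat P"
  shows "\<exists>\<mu>. (\<forall>j. \<mu> $ j > 0) \<and> (\<Sum>j\<in>UNIV. \<mu> $ j) = 1 \<and>
             (\<forall>l. (\<Sum>j\<in>UNIV. \<mu> $ j * P $ j $ l) = \<mu> $ l)"
proof -
  obtain M \<delta> where "\<delta> > 0" "\<forall>j. matpow P M $ j $ undefined \<ge> \<delta>"
    using doeblin_cond[OF P irr ap] by blast
  then obtain \<pi> where lim: "\<And>j l. (\<lambda>t. matpow P t $ j $ l) \<longlonglongrightarrow> \<pi> $ l"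
    using doeblin_conv[OF P] by blast
  define L :: "real^'n^'n" where "L = (\<chi> j l. \<pi> $ l)"
  have limL: "\<And>j l. (\<lambda>t. matpow P t $ j $ l) \<longlonglongrightarrow> L $ j $ l" unfolding L_def using lim by simp
  have st: "(\<Sum>j\<in>UNIV. \<pi> $ j * P $ j $ l) = \<pi> $ l" for l
  proof -
    have "(\<lambda>t. matpow P (Suc t) $ undefined $ l) \<longlonglongrightarrow> (\<Sum>p\<in>UNIV. \<pi> $ p * P $ p $ l)"
      unfolding matpow.simps mmult_entry by (intro tendsto_intros lim)
    moreover have "(\<lambda>t. matpow P (Suc t) $ undefined $ l) \<longlonglongrightarrow> \<pi> $ l" by (rule LIMSEQ_Suc[OF lim])
    ultimately show ?thesis using LIMSEQ_unique by blast
  qed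
  have Ls: "row_stochastic L" by (rule limit_stoch[OF P limL])
  have s1: "(\<Sum>j\<in>UNIV. \<pi> $ j) = 1" using stoch_sum[OF Ls, of undefined] unfolding L_def by simp
  have nn: "\<pi> $ j \<ge> 0" for j using stoch_nonneg[OF Ls, of undefined j] unfolding L_def by simp
  obtain j0 where j0: "\<pi> $ j0 > 0"
  proof (rule ccontr)
    assume "\<not> thesis"
    then have "\<forall>j. \<pi> $ j \<le> 0" using that by (meson not_le)
    then have "(\<Sum>j\<in>UNIV. \<pi> $ j) \<le> 0" by (intro sum_nonpos) auto
    then show False using s1 by simp
  qed
  have pos: "\<pi> $ l > 0" for l
  proof -
    obtain m where "(j0, l) \<in> edges P ^^ m"
      using irr unfolding irreducible_mat_def by (metis rtrancl_power)
    then have pm: "matpow P m $ j0 $ l > 0" using relpow_pos[OF P] by blast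
    have "\<pi> $ j0 * matpow P m $ j0 $ l \<le> (\<Sum>j\<in>UNIV. \<pi> $ j * matpow P m $ j $ l)"
      by (rule member_le_sum[where f="\<lambda>j. \<pi> $ j * matpow P m $ j $ l"])
         (auto intro!: mult_nonneg_nonneg nn stoch_nonneg[OF stoch_matpow[OF P]])
    then have "\<pi> $ j0 * matpow P m $ j0 $ l \<le> \<pi> $ l" using stationary_iter[OF st] by simp
    moreover have "\<pi> $ j0 * matpow P m $ j0 $ l > 0" using j0 pm by simp
    ultimately show ?thesis by simp
  qed
  show ?thesis using pos s1 st by blast
qed


lemma H_ergodic:
  fixes P :: "real^'n^'n" and \<mu> z :: "real^'n"
  assumes P: "row_stochastic P" and irr: "irreducible_mat P" and ap: "aperiodic_mat P"
    and \<mu>pos: "\<And>j. \<mu> $ j > 0" and \<mu>st: "\<And>l. (\<Sum>j\<in>UNIV. \<mu> $ j * P $ j $ l) = \<mu> $ l"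
    and z: "dom01 z" and zl: "\<And>i. z $ i < 1"
  shows "Hmat P z $ j $ l = (\<mu> $ l / (1 - z $ l)) / (\<Sum>k\<in>UNIV. \<mu> $ k / (1 - z $ k))"
proof -
  define W where "W = Wmat P z"
  have W: "row_stochastic W" unfolding W_def by (rule Wmat_stoch[OF P z])
  obtain M \<delta> where "\<delta> > 0" "\<forall>j. matpow W M $ j $ undefined \<ge> \<delta>"
    using doeblin_cond[OF W, of undefined] irred_aper_Wmat[OF P irr ap z zl] unfolding W_def by blast
  then obtain \<pi>' where lim: "\<And>j l. (\<lambda>t. matpow W t $ j $ l) \<longlonglongrightarrow> \<pi>' $ l"
    using doeblin_conv[OF W] by blast
  define N where "N = (\<Sum>k\<in>UNIV. \<mu> $ k / (1 - z $ k))"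
  have Npos: "N > 0" unfolding N_def using \<mu>pos zl
    by (intro sum_pos) (auto intro: divide_pos_pos)
  define \<pi> :: "real^'n" where "\<pi> = (\<chi> l. (\<mu> $ l / (1 - z $ l)) / N)"
  have "(\<Sum>j\<in>UNIV. \<pi> $ j) = (\<Sum>j\<in>UNIV. \<mu> $ j / (1 - z $ j)) / N"
    unfolding \<pi>_def by (simp only: vec_lambda_beta sum_divide_distrib)
  then have \<pi>1: "(\<Sum>j\<in>UNIV. \<pi> $ j) = 1" using Npos unfolding N_def by simp
  have \<pi>st: "(\<Sum>j\<in>UNIV. \<pi> $ j * W $ j $ l) = \<pi> $ l" for l
  proof -
    have e: "\<pi> $ j * (1 - z $ j) = \<mu> $ j / N" for j
      unfolding \<pi>_def using zl[of j] Npos by (simp add: field_simps)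
    have "(\<Sum>j\<in>UNIV. \<pi> $ j * W $ j $ l)
        = (\<Sum>j\<in>UNIV. (\<pi> $ j * (1 - z $ j)) * P $ j $ l + (if j = l then \<pi> $ j * z $ j else 0))"
      unfolding W_def Wmat_entry by (intro sum.cong) (auto simp: algebra_simps)
    also have "\<dots> = (\<Sum>j\<in>UNIV. \<mu> $ j * P $ j $ l) / N + \<pi> $ l * z $ l"
      unfolding e by (simp add: sum.distrib sum_divide_distrib)
    also have "\<dots> = \<mu> $ l / N + \<pi> $ l * z $ l" using \<mu>st by simp
    also have "\<dots> = \<pi> $ l" using e[of l] by (simp add: algebra_simps)
    finally show ?thesis .
  qed
  have eq: "\<pi>' $ l = \<pi> $ l" for l
  proof -
    have "(\<lambda>t. \<Sum>j\<in>UNIV. \<pi> $ j * matpow W t $ j $ l) \<longlonglongrightarrow> (\<Sum>j\<in>UNIV. \<pi> $ j * \<pi>' $ l)"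
      by (intro tendsto_intros lim)
    moreover have "(\<Sum>j\<in>UNIV. \<pi> $ j * \<pi>' $ l) = \<pi>' $ l" using \<pi>1 by (simp add: sum_distrib_right[symmetric])
    ultimately show ?thesis using stationary_iter[OF \<pi>st] by (simp add: LIMSEQ_const_iff)
  qed
  have "Hmat P z = (\<chi> j l. \<pi> $ l)"
    by (rule Hmat_eq) (use lim eq in \<open>simp add: W_def\<close>)
  then show ?thesis unfolding \<pi>_def N_def by simp
qed

lemma reach_absorb:
  assumes P: "row_stochastic P" and irr: "irreducible_mat P" and z: "dom01 z" and s: "z $ s = 1"
  shows "\<exists>k. z $ k = 1 \<and> (\<exists>m. matpow (Wmat P z) m $ j $ k > 0)"
proof -
  have W: "row_stochastic (Wmat P z)" by (rule Wmat_stoch[OF P z])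
  have "(j, s) \<in> (edges P)\<^sup>*" using irr unfolding irreducible_mat_def by blast
  then have "\<exists>k. z $ k = 1 \<and> (j, k) \<in> (edges (Wmat P z))\<^sup>*"
  proof (induction rule: converse_rtrancl_induct)
    case base then show ?case using s by blast
  next
    case (step y y')
    show ?case
    proof (cases "z $ y = 1")
      case True then show ?thesis by blast
    next
      case False
      then have "z $ y < 1" using z unfolding dom01_def by (meson less_le)
      then have "(y, y') \<in> edges (Wmat P z)" using edges_Wmat[OF P z _ step(1)] by blast
      then show ?thesis using step(3) by (meson converse_rtrancl_into_rtrancl)
    qed
  qed
  then show ?thesis using relpow_pos[OF W] by (metis rtrancl_power)
qed

lemma H_absorb:
  fixes P :: "real^'n^'n" and z :: "real^'n"
  assumes P: "row_stochastic P" and irr: "irreducible_mat P" and z: "dom01 z" and s: "z $ s = 1"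
  shows "(\<forall>j l. (\<lambda>t. matpow (Wmat P z) t $ j $ l) \<longlonglongrightarrow> Hmat P z $ j $ l) \<and>
         row_stochastic (Hmat P z) \<and> (\<forall>j l. z $ l \<noteq> 1 \<longrightarrow> Hmat P z $ j $ l = 0) \<and>
         (\<forall>k l. z $ k = 1 \<longrightarrow> Hmat P z $ k $ l = (if l = k then 1 else 0))"
proof -
  define W where "W = Wmat P z"
  have W: "row_stochastic W" unfolding W_def by (rule Wmat_stoch[OF P z])
  have abs: "W $ k $ k = 1" if "k \<in> {k. z $ k = 1}" for k using that unfolding W_def Wmat_entry by simp
  have reach: "\<exists>k\<in>{k. z $ k = 1}. \<exists>m. matpow W m $ j $ k > 0" for j
    using reach_absorb[OF P irr z s] unfolding W_def by blast
  obtain L where L: "\<forall>j l. (\<lambda>t. matpow W t $ j $ l) \<longlonglongrightarrow> L $ j $ l"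
      "\<forall>j l. l \<notin> {k. z $ k = 1} \<longrightarrow> L $ j $ l = 0"
    using absorb_conv[OF W abs reach] by blast
  have H: "Hmat P z = L" by (rule Hmat_eq) (use L in \<open>auto simp: W_def\<close>)
  have rows: "L $ k $ l = (if l = k then 1 else 0)" if "z $ k = 1" for k l
  proof -
    have "(\<lambda>t. matpow W t $ k $ l) \<longlonglongrightarrow> (if l = k then 1 else 0)"
      using absorbing_matpow_row[OF W abs[of k]] that by simp
    then show ?thesis using L(1) LIMSEQ_unique by blast
  qed
  show ?thesis using L H rows limit_stoch[OF W] unfolding W_def by auto
qed

lemma max_principle:
  fixes P :: "real^'n^'n" and f :: "'n \<Rightarrow> real"
  assumes P: "row_stochastic P" and irr: "irreducible_mat P" and s: "s \<in> S"
    and harm: "\<And>j. j \<notin> S \<Longrightarrow> f j = (\<Sum>p\<in>UNIV. P $ j $ p * f p)"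
    and bd: "\<And>j. j \<in> S \<Longrightarrow> f j = 0"
  shows "f j \<le> 0"
proof -
  define M where "M = Max (range f)"
  have fM: "f q \<le> M" for q unfolding M_def by (rule Max_ge) auto
  have "M \<in> range f" unfolding M_def by (rule Max_in) auto
  then obtain j0 where j0: "f j0 = M" by auto
  have propg: "f p = M" if "f q = M" "q \<notin> S" "(q, p) \<in> edges P" for q p
  proof -
    have "(\<Sum>p\<in>UNIV. P $ q $ p * (M - f p)) = M * (\<Sum>p\<in>UNIV. P $ q $ p) - (\<Sum>p\<in>UNIV. P $ q $ p * f p)"
      by (simp add: algebra_simps sum_subtractf sum_distrib_left)
    then have "(\<Sum>p\<in>UNIV. P $ q $ p * (M - f p)) = M - f q"
      using harm[OF that(2)] stoch_sum[OF P, of q] by simp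
    then have "(\<Sum>p\<in>UNIV. P $ q $ p * (M - f p)) = 0" using that(1) by simp
    then have "\<forall>p\<in>UNIV. P $ q $ p * (M - f p) = 0"
      using sum_nonneg_eq_0_iff[of UNIV "\<lambda>p. P $ q $ p * (M - f p)"] stoch_nonneg[OF P] fM by auto
    then show ?thesis using that(3) unfolding edges_def by force
  qed
  have "(j0, s) \<in> (edges P)\<^sup>*" using irr unfolding irreducible_mat_def by blast
  then have "f s = M \<or> (\<exists>s'\<in>S. f s' = M)"
  proof (induction rule: rtrancl_induct)
    case base then show ?case using j0 by simp
  next
    case (step y y')
    then show ?case using propg by blast
  qed
  then have "M = 0" using bd s by auto
  then show ?thesis using fM by simp
qed

lemma H_harmonic:
  assumes P: "row_stochastic P" and z: "dom01 z" and zj: "z $ j < 1"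
    and lim: "\<And>j l. (\<lambda>t. matpow (Wmat P z) t $ j $ l) \<longlonglongrightarrow> L $ j $ l"
  shows "L $ j $ l = (\<Sum>p\<in>UNIV. P $ j $ p * L $ p $ l)"
proof -
  have "L $ j $ l = (\<Sum>p\<in>UNIV. Wmat P z $ j $ p * L $ p $ l)" by (rule limit_fixed[OF lim])
  also have "\<dots> = (\<Sum>p\<in>UNIV. (1 - z $ j) * (P $ j $ p * L $ p $ l) + (if p = j then z $ j * L $ j $ l else 0))"
    unfolding Wmat_entry by (intro sum.cong) (auto simp: algebra_simps)
  also have "\<dots> = (1 - z $ j) * (\<Sum>p\<in>UNIV. P $ j $ p * L $ p $ l) + z $ j * L $ j $ l"
    by (simp add: sum.distrib sum_distrib_left)
  finally have "(1 - z $ j) * L $ j $ l = (1 - z $ j) * (\<Sum>p\<in>UNIV. P $ j $ p * L $ p $ l)"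
    by (simp add: algebra_simps)
  then show ?thesis using zj by simp
qed

lemma H_unique:
  fixes P :: "real^'n^'n" and z z' :: "real^'n"
  assumes P: "row_stochastic P" and irr: "irreducible_mat P" and z: "dom01 z" and z': "dom01 z'"
    and same: "\<And>j. z $ j = 1 \<longleftrightarrow> z' $ j = 1" and s: "z $ s = 1"
  shows "Hmat P z = Hmat P z'"
proof -
  have s': "z' $ s = 1" using same s by simp
  note A = H_absorb[OF P irr z s] and A' = H_absorb[OF P irr z' s']
  have key: "Hmat P z $ j $ l - Hmat P z' $ j $ l \<le> 0 \<and> - (Hmat P z $ j $ l - Hmat P z' $ j $ l) \<le> 0" for j l
  proof -
    define S where "S = {j. z $ j = 1}"
    have sS: "s \<in> S" using s unfolding S_def by simp
    have lt: "z $ j < 1" "z' $ j < 1" if "j \<notin> S" for j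
      using that z z' same[of j] unfolding S_def dom01_def by (auto simp: less_le)
    have h: "Hmat P z $ j $ l = (\<Sum>p\<in>UNIV. P $ j $ p * Hmat P z $ p $ l)"
            "Hmat P z' $ j $ l = (\<Sum>p\<in>UNIV. P $ j $ p * Hmat P z' $ p $ l)" if "j \<notin> S" for j
      using H_harmonic[OF P z lt(1)[OF that]] H_harmonic[OF P z' lt(2)[OF that]] A A' by blast+
    have b: "Hmat P z $ j $ l = Hmat P z' $ j $ l" if "j \<in> S" for j
      using that A A' same unfolding S_def by auto
    show ?thesis
    proof
      show "Hmat P z $ j $ l - Hmat P z' $ j $ l \<le> 0"
        by (rule max_principle[OF P irr sS, where f="\<lambda>j. Hmat P z $ j $ l - Hmat P z' $ j $ l"])
           (use h b in \<open>auto simp: sum_subtractf right_diff_distrib\<close>)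
      show "- (Hmat P z $ j $ l - Hmat P z' $ j $ l) \<le> 0"
        by (rule max_principle[OF P irr sS, where f="\<lambda>j. - (Hmat P z $ j $ l - Hmat P z' $ j $ l)"])
           (use h b in \<open>auto simp: sum_subtractf right_diff_distrib sum_negf\<close>)
    qed
  qed
  then have "Hmat P z $ j $ l = Hmat P z' $ j $ l" for j l
    using key[of j l] by linarith
  then show ?thesis by (simp add: vec_eq_iff)
qed


lemma g_min:
  fixes s b c a u :: real
  assumes s: "s > 0" and b: "b > 0" and c: "c > 0" and a: "a > 0" and u: "u \<ge> a"
    and v: "v = max a (c / (s * b))" and uv: "u \<noteq> v"
  shows "(v^2 * s + c) / (v + b)^2 < (u^2 * s + c) / (u + b)^2"
proof -
  have vpos: "v > 0" using v a by auto
  have upos: "u > 0" using u a by auto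
  have key: "(u^2 * s + c) * (v + b)^2 - (v^2 * s + c) * (u + b)^2
        = (u - v) * (s * b * (2 * u * v + b * u + b * v) - c * (u + v + 2 * b))"
    by (simp add: algebra_simps power2_eq_square)
  have pos: "(u - v) * (s * b * (2 * u * v + b * u + b * v) - c * (u + v + 2 * b)) > 0"
  proof (cases "c / (s * b) \<ge> a")
    case True
    then have vv: "v = c / (s * b)" using v by simp
    then have cc: "c = s * b * v" using s b by (simp add: field_simps)
    have "(u - v) * (s * b * (2 * u * v + b * u + b * v) - c * (u + v + 2 * b))
          = s * b * (v + b) * (u - v)^2"
      unfolding cc by (simp add: algebra_simps power2_eq_square)
    also have "\<dots> > 0" using s b vpos uv by (simp add: mult_pos_pos)
    finally show ?thesis .
  next
    case False
    then have va: "v = a" and ca: "c < s * b * a" using v s b by (auto simp: field_simps)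
    have ua: "u > a" using u uv va by simp
    have sb: "s * b > 0" using s b by simp
    have cu: "c < s * b * u" using ca mult_strict_left_mono[OF ua sb] by simp
    have cv: "c < s * b * v" using ca va by simp
    have "c * u < s * b * v * u" using mult_strict_right_mono[OF cv upos] .
    moreover have "c * v < s * b * u * v" using mult_strict_right_mono[OF cu vpos] .
    moreover have "c * b < s * b * v * b" using mult_strict_right_mono[OF cv b] .
    moreover have "c * b < s * b * u * b" using mult_strict_right_mono[OF cu b] .
    ultimately have "s * b * (2 * u * v + b * u + b * v) - c * (u + v + 2 * b) > 0"
      by (simp add: algebra_simps)
    then show ?thesis using ua va by simp
  qed
  have d1: "(v + b)^2 > 0" "(u + b)^2 > 0" using vpos upos b by auto
  show ?thesis using key pos d1 by (simp add: divide_less_eq less_divide_eq field_simps)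
qed

lemma g_lt_s:
  fixes s b c a :: real
  assumes s: "s > 0" and b: "b > 0" and c: "c > 0" and a: "a > 0"
    and v: "v = max a (c / (s * b))"
  shows "(v^2 * s + c) / (v + b)^2 < s"
proof -
  have vpos: "v > 0" using v a by auto
  have cle: "c \<le> s * b * v"
  proof -
    have "c / (s * b) \<le> v" using v by simp
    then show ?thesis using s b by (simp add: field_simps)
  qed
  have "v^2 * s + c < s * (v + b)^2"
  proof -
    have "s * (v + b)^2 - (v^2 * s + c) = 2 * s * b * v + s * b * b - c"
      by (simp add: algebra_simps power2_eq_square)
    also have "\<dots> > 0"
    proof -
      have "s * b * v > 0" "s * b * b > 0" using s b vpos by simp_all
      then show ?thesis using cle by linarith
    qed
    finally show ?thesis by simp
  qed
  moreover have "(v + b)^2 > 0" using vpos b by auto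
  ultimately show ?thesis by (simp add: divide_less_eq)
qed

lemma upd_nth: "upd z k x $ j = (if j = k then x else z $ j)"
  by (simp add: upd_def)

lemma upd_upd: "upd (upd z k a) k x = upd z k x"
  by (simp add: upd_def vec_eq_iff)

lemma br_upd: "best_resp P \<sigma>2 k (upd z k a) = best_resp P \<sigma>2 k z"
  unfolding best_resp_def upd_upd ..

lemma dom01_upd: "dom01 z \<Longrightarrow> 0 \<le> x \<Longrightarrow> x \<le> 1 \<Longrightarrow> dom01 (upd z k x)"
  unfolding dom01_def upd_nth by auto

lemma cost_stubborn:
  assumes P: "row_stochastic P" and irr: "irreducible_mat P" and z: "dom01 z" and k: "z $ k = 1"
  shows "cost P \<sigma>2 k z = \<sigma>2 $ k"
proof -
  have "Hmat P z $ k $ j = (if j = k then 1 else 0)" for j using H_absorb[OF P irr z k] k by blast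
  then have "(Hmat P z $ k $ j)^2 * \<sigma>2 $ j = (if j = k then \<sigma>2 $ k else 0)" for j
    by (cases "j = k") auto
  then show ?thesis unfolding cost_def by simp
qed

lemma cost_absorb_le:
  assumes P: "row_stochastic P" and irr: "irreducible_mat P" and z: "dom01 z" and s: "z $ s = 1"
    and k: "z $ k \<noteq> 1" and \<sigma>: "\<And>j. \<sigma>2 $ j \<ge> 0" and c: "\<And>j. z $ j = 1 \<Longrightarrow> \<sigma>2 $ j \<le> c"
  shows "cost P \<sigma>2 k z \<le> c"
proof -
  note A = H_absorb[OF P irr z s]
  have Hs: "row_stochastic (Hmat P z)" using A by blast
  have c0: "c \<ge> 0" using c[OF s] \<sigma>[of s] by simp
  have trm: "(Hmat P z $ k $ j)^2 * \<sigma>2 $ j \<le> Hmat P z $ k $ j * c" for j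
  proof (cases "z $ j = 1")
    case True
    have h: "0 \<le> Hmat P z $ k $ j" "Hmat P z $ k $ j \<le> 1"
      using stoch_nonneg[OF Hs] stoch_le1[OF Hs] by auto
    have "(Hmat P z $ k $ j)^2 * \<sigma>2 $ j \<le> Hmat P z $ k $ j * \<sigma>2 $ j"
      using h \<sigma>[of j] by (simp add: power2_eq_square mult_right_le_one_le mult_right_mono)
    also have "\<dots> \<le> Hmat P z $ k $ j * c" using h c[OF True] by (simp add: mult_left_mono)
    finally show ?thesis .
  next
    case False
    then show ?thesis using A by simp
  qed
  have "cost P \<sigma>2 k z \<le> (\<Sum>j\<in>UNIV. Hmat P z $ k $ j * c)"
    unfolding cost_def by (intro sum_mono trm)
  also have "\<dots> = c" using stoch_sum[OF Hs] by (simp add: sum_distrib_right[symmetric])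
  finally show ?thesis .
qed


lemma cost_ergodic_formula:
  fixes P :: "real^'n^'n" and \<mu> z :: "real^'n"
  assumes P: "row_stochastic P" and irr: "irreducible_mat P" and ap: "aperiodic_mat P"
    and \<mu>pos: "\<And>j. \<mu> $ j > 0" and \<mu>st: "\<And>l. (\<Sum>j\<in>UNIV. \<mu> $ j * P $ j $ l) = \<mu> $ l"
    and z: "dom01 z" and zl: "\<And>i. z $ i < 1"
  shows "cost P \<sigma>2 k z =
    ((\<mu> $ k / (1 - z $ k))^2 * \<sigma>2 $ k + (\<Sum>j\<in>UNIV - {k}. (\<mu> $ j / (1 - z $ j))^2 * \<sigma>2 $ j))
    / (\<mu> $ k / (1 - z $ k) + (\<Sum>j\<in>UNIV - {k}. \<mu> $ j / (1 - z $ j)))^2"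
proof -
  define w where "w j = \<mu> $ j / (1 - z $ j)" for j
  define N where "N = (\<Sum>j\<in>UNIV. w j)"
  have H: "Hmat P z $ k $ j = w j / N" for j
    unfolding w_def N_def by (rule H_ergodic[OF P irr ap \<mu>pos \<mu>st z zl])
  have "cost P \<sigma>2 k z = (\<Sum>j\<in>UNIV. (w j)^2 * \<sigma>2 $ j) / N^2"
    unfolding cost_def H by (simp add: sum_divide_distrib power_divide)
  also have "(\<Sum>j\<in>UNIV. (w j)^2 * \<sigma>2 $ j) = (w k)^2 * \<sigma>2 $ k + (\<Sum>j\<in>UNIV - {k}. (w j)^2 * \<sigma>2 $ j)"
    by (simp add: sum.remove)
  also have "N = w k + (\<Sum>j\<in>UNIV - {k}. w j)" unfolding N_def by (simp add: sum.remove)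
  finally show ?thesis unfolding w_def .
qed

lemma br_single:
  fixes P :: "real^'n^'n" and z :: "real^'n"
  assumes P: "row_stochastic P" and irr: "irreducible_mat P" and ap: "aperiodic_mat P"
    and \<sigma>: "\<And>j. \<sigma>2 $ j > 0" and z: "dom01 z" and others: "\<And>j. j \<noteq> k \<Longrightarrow> z $ j < 1"
  shows "best_resp P \<sigma>2 k z = {0..1} \<or> (\<exists>y0. 0 \<le> y0 \<and> y0 < 1 \<and> best_resp P \<sigma>2 k z = {y0})"
proof -
  obtain \<mu> :: "real^'n" where \<mu>pos: "\<And>j. \<mu> $ j > 0" and \<mu>st: "\<And>l. (\<Sum>j\<in>UNIV. \<mu> $ j * P $ j $ l) = \<mu> $ l"
    using stationary_P[OF P irr ap] by blast
  define f where "f x = cost P \<sigma>2 k (upd z k x)" for x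
  have BR: "best_resp P \<sigma>2 k z = {x \<in> {0..1}. \<forall>y\<in>{0..1}. f x \<le> f y}"
    unfolding best_resp_def f_def ..
  define s where "s = \<sigma>2 $ k"
  define b where "b = (\<Sum>j\<in>UNIV - {k}. \<mu> $ j / (1 - z $ j))"
  define c where "c = (\<Sum>j\<in>UNIV - {k}. (\<mu> $ j / (1 - z $ j))^2 * \<sigma>2 $ j)"
  define a where "a = \<mu> $ k"
  have spos: "s > 0" unfolding s_def using \<sigma> by simp
  have apos: "a > 0" unfolding a_def using \<mu>pos by simp
  have f1: "f 1 = s" unfolding f_def s_def
    by (rule cost_stubborn[OF P irr dom01_upd[OF z]]) (auto simp: upd_nth)
  have fx: "f x = ((a / (1 - x))^2 * s + c) / (a / (1 - x) + b)^2" if x: "0 \<le> x" "x < 1" for x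
  proof -
    have zx: "dom01 (upd z k x)" using dom01_upd[OF z] x by simp
    have zl: "upd z k x $ i < 1" for i using x others[of i] by (auto simp: upd_nth)
    have e1: "(\<Sum>j\<in>UNIV - {k}. \<mu> $ j / (1 - upd z k x $ j)) = b"
      unfolding b_def by (intro sum.cong) (auto simp: upd_nth)
    have e2: "(\<Sum>j\<in>UNIV - {k}. (\<mu> $ j / (1 - upd z k x $ j))^2 * \<sigma>2 $ j) = c"
      unfolding c_def by (intro sum.cong) (auto simp: upd_nth)
    show ?thesis unfolding f_def cost_ergodic_formula[OF P irr ap \<mu>pos \<mu>st zx zl] e1 e2
      by (simp add: upd_nth a_def s_def)
  qed
  have bnn: "b \<ge> 0" unfolding b_def using \<mu>pos others
    by (intro sum_nonneg) (auto intro!: divide_nonneg_pos simp: less_imp_le)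
  show ?thesis
  proof (cases "b = 0")
    case True
    have emp: "UNIV - {k} = {}"
    proof (rule ccontr)
      assume "UNIV - {k} \<noteq> {}"
      then have "b > 0" unfolding b_def using \<mu>pos others
        by (intro sum_pos) (auto intro!: divide_pos_pos)
      then show False using True by simp
    qed
    then have c0: "c = 0" unfolding c_def by (simp only: sum.empty)
    have "f x = s" if "0 \<le> x" "x \<le> 1" for x
    proof (cases "x = 1")
      case True then show ?thesis using f1 by simp
    next
      case False
      then have x1: "x < 1" using that by simp
      define u where "u = a / (1 - x)"
      have "u > 0" unfolding u_def using apos x1 by simp
      then have "(u^2 * s + c) / (u + b)^2 = s" using True c0 by simp
      then show ?thesis using fx[OF that(1) x1] unfolding u_def by simp
    qed
    then have "best_resp P \<sigma>2 k z = {0..1}" unfolding BR by auto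
    then show ?thesis by blast
  next
    case False
    then have bpos: "b > 0" using bnn by simp
    have ne: "UNIV - {k} \<noteq> {}"
    proof
      assume "UNIV - {k} = {}"
      then have "b = 0" unfolding b_def by (simp only: sum.empty)
      then show False using bpos by simp
    qed
    have cpos: "c > 0" unfolding c_def using \<mu>pos others \<sigma> ne
      by (intro sum_pos) (auto intro!: mult_pos_pos divide_pos_pos simp: less_imp_neq dual_order.strict_implies_not_eq)
    define v where "v = max a (c / (s * b))"
    define y0 where "y0 = 1 - a / v"
    have vpos: "v > 0" and av: "a \<le> v" unfolding v_def using apos by auto
    have y0: "0 \<le> y0" "y0 < 1" unfolding y0_def using apos vpos av by (auto simp: field_simps)
    have uy0: "a / (1 - y0) = v" unfolding y0_def using apos vpos by simp
    have gmin: "f y0 < f x" if x: "0 \<le> x" "x \<le> 1" "x \<noteq> y0" for x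
    proof (cases "x = 1")
      case True
      have "f y0 = (v^2 * s + c) / (v + b)^2" using fx[OF y0] uy0 by simp
      also have "\<dots> < s" by (rule g_lt_s[OF spos bpos cpos apos v_def])
      finally show ?thesis using True f1 by simp
    next
      case False
      then have x1: "x < 1" using x by simp
      have ua: "a / (1 - x) \<ge> a" using apos x x1 by (simp add: field_simps)
      have uv: "a / (1 - x) \<noteq> v"
      proof
        assume "a / (1 - x) = v"
        then have "x = y0" unfolding y0_def using apos x1 vpos by (auto simp: field_simps)
        then show False using x by simp
      qed
      have "f y0 = (v^2 * s + c) / (v + b)^2" using fx[OF y0] uy0 by simp
      also have "\<dots> < ((a / (1 - x))^2 * s + c) / (a / (1 - x) + b)^2"
        by (rule g_min[OF spos bpos cpos apos ua v_def uv])
      also have "\<dots> = f x" using fx[OF x(1) x1] by simp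
      finally show ?thesis .
    qed
    have "best_resp P \<sigma>2 k z = {y0}"
    proof
      show "{y0} \<subseteq> best_resp P \<sigma>2 k z"
        unfolding BR using y0 gmin by (auto simp: less_imp_le) (metis less_imp_le order_refl)
      show "best_resp P \<sigma>2 k z \<subseteq> {y0}"
        unfolding BR using y0 gmin by (auto) (meson atLeastAtMost_iff less_imp_le not_le)
    qed
    then show ?thesis using y0 by blast
  qed
qed

lemma br_multi:
  fixes P :: "real^'n^'n" and z :: "real^'n"
  assumes P: "row_stochastic P" and irr: "irreducible_mat P"
    and \<sigma>: "\<And>j. \<sigma>2 $ j > 0" and z: "dom01 z" and s: "s \<noteq> k" "z $ s = 1"
    and mx: "\<And>j. z $ j = 1 \<Longrightarrow> \<sigma>2 $ j \<le> \<sigma>2 $ k"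
  shows "best_resp P \<sigma>2 k z = {0..<1} \<or> best_resp P \<sigma>2 k z = {0..1}"
proof -
  define f where "f x = cost P \<sigma>2 k (upd z k x)" for x
  have BR: "best_resp P \<sigma>2 k z = {x \<in> {0..1}. \<forall>y\<in>{0..1}. f x \<le> f y}"
    unfolding best_resp_def f_def ..
  have f1: "f 1 = \<sigma>2 $ k" unfolding f_def
    by (rule cost_stubborn[OF P irr dom01_upd[OF z]]) (auto simp: upd_nth)
  have fconst: "f x = f 0" if "0 \<le> x" "x < 1" for x
  proof -
    have "Hmat P (upd z k x) = Hmat P (upd z k 0)"
      by (rule H_unique[OF P irr dom01_upd[OF z] dom01_upd[OF z], where s=s])
         (use that s in \<open>auto simp: upd_nth\<close>)
    then show ?thesis unfolding f_def cost_def by simp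
  qed
  have f0: "f 0 \<le> \<sigma>2 $ k" unfolding f_def
    by (rule cost_absorb_le[OF P irr dom01_upd[OF z], where s=s])
       (use s \<sigma> mx in \<open>auto simp: upd_nth less_imp_le split: if_splits\<close>)
  have sub: "{0..<1} \<subseteq> best_resp P \<sigma>2 k z"
  proof
    fix x :: real assume "x \<in> {0..<1}"
    then have x: "0 \<le> x" "x < 1" by auto
    have "f x \<le> f y" if "y \<in> {0..1}" for y
    proof (cases "y = 1")
      case True then show ?thesis using fconst[OF x] f0 f1 by simp
    next
      case False then show ?thesis using fconst[OF x] fconst[of y] that by simp
    qed
    then show "x \<in> best_resp P \<sigma>2 k z" unfolding BR using x by auto
  qed
  have sup: "best_resp P \<sigma>2 k z \<subseteq> {0..1}" unfolding BR by auto
  show ?thesis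
  proof (cases "1 \<in> best_resp P \<sigma>2 k z")
    case True
    then have "best_resp P \<sigma>2 k z = {0..1}" using sub sup by fastforce
    then show ?thesis by blast
  next
    case False
    have "best_resp P \<sigma>2 k z \<subseteq> {0..<1}"
    proof
      fix x assume "x \<in> best_resp P \<sigma>2 k z"
      then show "x \<in> {0..<1}" using sup False by (cases "x = 1") auto
    qed
    then have "best_resp P \<sigma>2 k z = {0..<1}" using sub by blast
    then show ?thesis by blast
  qed
qed


lemma upd_eq_lin: "upd z k x = z + (x - z $ k) *\<^sub>R axis k 1"
  by (simp add: upd_def vec_eq_iff axis_def)

lemma upd_measurable: "(\<lambda>x::real. upd z k x) \<in> borel_measurable borel"
  unfolding upd_eq_lin by (intro borel_measurable_continuous_onI continuous_intros)

lemma unif_singleton: "unif {b} = return borel b"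
  unfolding unif_def by auto

lemma sets_unif: "sets (unif B) = sets borel"
  unfolding unif_def by (auto simp: sets_uniform_measure)

lemma emeasure_density_le:
  "emeasure (density M f) X \<le> (\<integral>\<^sup>+x. f x * indicator X x \<partial>M)"
  unfolding density_def emeasure_measure_of_conv by (simp split: if_split)

lemma unif_null:
  assumes sing: "\<And>b. B = {b} \<Longrightarrow> b \<notin> X" and X: "X \<in> sets borel"
    and Y: "B \<inter> X \<subseteq> Y" "Y \<in> sets lborel" "emeasure lborel Y = 0"
  shows "emeasure (unif B) X = 0"
proof (cases "\<exists>b. B = {b}")
  case True
  then obtain b where b: "B = {b}" by blast
  then show ?thesis using sing[OF b] X by (simp add: unif_singleton emeasure_return)
next
  case False
  then have u: "unif B = uniform_measure lborel B" unfolding unif_def by auto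
  have "emeasure (unif B) X \<le> (\<integral>\<^sup>+x. (indicator B x / emeasure lborel B) * indicator X x \<partial>lborel)"
    unfolding u uniform_measure_def by (rule emeasure_density_le)
  also have "\<dots> \<le> (\<integral>\<^sup>+x. \<infinity> * indicator Y x \<partial>lborel)"
  proof (rule nn_integral_mono)
    fix x
    show "indicator B x / emeasure lborel B * indicator X x \<le> \<infinity> * indicator Y x"
      using Y(1) by (cases "x \<in> Y") (auto simp: indicator_def)
  qed
  also have "\<dots> = 0" using Y by (simp add: nn_integral_cmult_indicator)
  finally show ?thesis by simp
qed

lemma Icc01_not_single: "{0..1::real} \<noteq> {b}"
proof
  assume h: "{0..1::real} = {b}"
  moreover have "(0::real) \<in> {0..1}" "(1::real) \<in> {0..1}" by auto
  ultimately have "(0::real) = b" "(1::real) = b" by auto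
  then show False by simp
qed

lemma unif_good:
  assumes "B = {0..1} \<or> B = {0..<1} \<or> (\<exists>y0. 0 \<le> y0 \<and> y0 < 1 \<and> B = {y0})"
  shows "emeasure (unif B) {0..<1::real} = 1"
proof -
  have ns1: "\<not> (\<exists>b. {0..1::real} = {b})"
  proof
    assume "\<exists>b. {0..1::real} = {b}"
    then obtain b where "{0..1::real} = {b}" by blast
    moreover have "(0::real) \<in> {0..1}" "(1::real) \<in> {0..1}" by auto
    ultimately have "(0::real) = b" "(1::real) = b" by auto
    then show False by simp
  qed
  have ns2: "\<not> (\<exists>b. {0..<1::real} = {b})"
  proof
    assume "\<exists>b. {0..<1::real} = {b}"
    then obtain b where b: "{0..<1::real} = {b}" by blast
    moreover have "(0::real) \<in> {0..<1}" "(1/2::real) \<in> {0..<1}" by auto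
    ultimately have "(0::real) = b" "(1/2::real) = b" by auto
    then show False by simp
  qed
  from assms consider "B = {0..1}" | "B = {0..<1}" | y0 where "0 \<le> y0" "y0 < 1" "B = {y0}" by blast
  then show ?thesis
  proof cases
    case 1
    then have "unif B = uniform_measure lborel {0..1}" unfolding unif_def using ns1 by auto
    moreover have "{0..1::real} \<inter> {0..<1} = {0..<1}" by auto
    ultimately show ?thesis using 1 by (simp add: emeasure_uniform_measure)
  next
    case 2
    then have "unif B = uniform_measure lborel {0..<1}" unfolding unif_def using ns2 by auto
    then show ?thesis using 2 by (simp add: emeasure_uniform_measure)
  next
    case 3
    then show ?thesis by (simp add: unif_singleton emeasure_return)
  qed
qed

lemma kernel_ge:
  "emeasure (unif (best_resp P \<sigma>2 k z)) {x. upd z k x \<in> A} / of_nat CARD('n) \<le> br_kernel P \<sigma>2 z A"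
  for z :: "real^'n"
  unfolding br_kernel_def by (intro divide_right_mono_ennreal member_le_sum) auto

lemma kernel_zero:
  fixes z :: "real^'n"
  assumes "\<And>k. emeasure (unif (best_resp P \<sigma>2 k z)) {x. upd z k x \<in> A} = 0"
  shows "br_kernel P \<sigma>2 z A = 0"
  unfolding br_kernel_def using assms by simp

definition Dset :: "(real^'n) set" where "Dset = {w. dom01 w}"
definition Gset :: "(real^'n) set" where "Gset = {w. dom01 w \<and> (\<forall>i. w $ i < 1)}"
definition cnt :: "real^'n \<Rightarrow> nat" where "cnt w = card {i. w $ i = 1}"
definition Cset :: "nat \<Rightarrow> (real^'n) set" where "Cset m = {w. dom01 w \<and> cnt w \<le> m}"

lemma Dset_borel: "Dset \<in> sets borel"
  unfolding Dset_def dom01_def by measurable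

lemma Gset_borel: "Gset \<in> sets borel"
  unfolding Gset_def dom01_def by measurable

lemma Cset_borel: "Cset m \<in> sets (borel :: (real^'n) measure)"
proof -
  have "Cset m = Dset \<inter> (\<Union>A\<in>{A. card A \<le> m}. {w::real^'n. \<forall>i. w $ i = 1 \<longrightarrow> i \<in> A})"
  proof (intro set_eqI iffI)
    fix w :: "real^'n" assume "w \<in> Cset m"
    then show "w \<in> Dset \<inter> (\<Union>A\<in>{A. card A \<le> m}. {w. \<forall>i. w $ i = 1 \<longrightarrow> i \<in> A})"
      unfolding Cset_def Dset_def cnt_def by auto
  next
    fix w :: "real^'n" assume "w \<in> Dset \<inter> (\<Union>A\<in>{A. card A \<le> m}. {w. \<forall>i. w $ i = 1 \<longrightarrow> i \<in> A})"
    then obtain A where "dom01 w" "card A \<le> m" "{i. w $ i = 1} \<subseteq> A" unfolding Dset_def by auto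
    moreover have "card {i. w $ i = 1} \<le> card A" by (rule card_mono) (use calculation in auto)
    ultimately show "w \<in> Cset m" unfolding Cset_def cnt_def by simp
  qed
  also have "\<dots> \<in> sets borel"
    by (intro sets.Int Dset_borel sets.finite_UN) (auto simp: Dset_def)
  finally show ?thesis .
qed

lemma G_sub_C: "Gset \<subseteq> Cset m"
proof
  fix w assume w: "w \<in> Gset"
  then have lt: "w $ i < 1" for i unfolding Gset_def by blast
  have "i \<notin> {i. w $ i = 1}" for i using lt[of i] by simp
  then have "{i. w $ i = 1} = {}" by blast
  then show "w \<in> Cset m" using w unfolding Gset_def Cset_def cnt_def by simp
qed

lemma kernel_D:
  fixes z :: "real^'n"
  assumes z: "z \<in> Dset"
  shows "br_kernel P \<sigma>2 z (- Dset) = 0"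
proof (rule kernel_zero)
  fix k
  have e: "{x. upd z k x \<in> - Dset} = - {0..1}"
    using z unfolding Dset_def dom01_def by (auto simp: upd_nth)
  show "emeasure (unif (best_resp P \<sigma>2 k z)) {x. upd z k x \<in> - Dset} = 0"
    unfolding e
    by (rule unif_null[where Y="{}"]) (auto simp: best_resp_def)
qed

context
  fixes P :: "real^'n^'n" and \<sigma>2 :: "real^'n"
  assumes P: "row_stochastic P" and irr: "irreducible_mat P" and ap: "aperiodic_mat P"
    and \<sigma>: "\<And>j. \<sigma>2 $ j > 0"
begin

lemma br_G:
  assumes z: "z \<in> Gset"
  shows "best_resp P \<sigma>2 k z = {0..1} \<or> (\<exists>y0. 0 \<le> y0 \<and> y0 < 1 \<and> best_resp P \<sigma>2 k z = {y0})"
  using z by (intro br_single[OF P irr ap \<sigma>]) (auto simp: Gset_def)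

lemma kernel_G:
  assumes z: "z \<in> Gset"
  shows "br_kernel P \<sigma>2 z (- Gset) = 0"
proof (rule kernel_zero)
  fix k
  have e: "{x. upd z k x \<in> - Gset} = - {0..<1}"
    using z unfolding Gset_def dom01_def by (auto simp: upd_nth)
  show "emeasure (unif (best_resp P \<sigma>2 k z)) {x. upd z k x \<in> - Gset} = 0"
    unfolding e
  proof (rule unif_null[where Y="{1}"])
    show "\<And>b. best_resp P \<sigma>2 k z = {b} \<Longrightarrow> b \<notin> - {0..<1}"
      using br_G[OF z, of k] Icc01_not_single by fastforce
    show "best_resp P \<sigma>2 k z \<inter> - {0..<1} \<subseteq> {1}" by (auto simp: best_resp_def)
  qed auto
qed

lemma kernel_GC:
  assumes z: "z \<in> Gset"
  shows "br_kernel P \<sigma>2 z (Cset m) \<ge> 1 / of_nat CARD('n)"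
proof -
  fix k :: 'n
  have sub: "{0..<1} \<subseteq> {x. upd z k x \<in> Cset m}"
    using z G_sub_C[of m] unfolding Gset_def dom01_def by (auto simp: upd_nth)
  have meas: "{x. upd z k x \<in> Cset m} \<in> sets (unif (best_resp P \<sigma>2 k z))"
    unfolding sets_unif using measurable_sets[OF upd_measurable Cset_borel, of z k] by (simp add: vimage_def)
  have "1 = emeasure (unif (best_resp P \<sigma>2 k z)) {0..<1}"
    by (rule unif_good[symmetric]) (use br_G[OF z, of k] in blast)
  also have "\<dots> \<le> emeasure (unif (best_resp P \<sigma>2 k z)) {x. upd z k x \<in> Cset m}"
    by (rule emeasure_mono[OF sub meas])
  finally have "1 / of_nat CARD('n) \<le> emeasure (unif (best_resp P \<sigma>2 k z)) {x. upd z k x \<in> Cset m} / of_nat CARD('n)"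
    by (rule divide_right_mono_ennreal)
  also have "\<dots> \<le> br_kernel P \<sigma>2 z (Cset m)" by (rule kernel_ge)
  finally show ?thesis .
qed

lemma kernel_C:
  assumes z: "z \<in> Dset" and nz: "z \<notin> Gset"
  shows "br_kernel P \<sigma>2 z (Cset (cnt z - 1)) \<ge> 1 / of_nat CARD('n)"
proof -
  define S where "S = {j. z $ j = 1}"
  have zd: "dom01 z" using z unfolding Dset_def by simp
  have "S \<noteq> {}"
  proof
    assume "S = {}"
    then have "\<forall>i. z $ i < 1" using zd unfolding S_def dom01_def by (auto simp: less_le)
    then show False using nz zd unfolding Gset_def by auto
  qed
  then have "Max ((\<lambda>j. \<sigma>2 $ j) ` S) \<in> (\<lambda>j. \<sigma>2 $ j) ` S" by (intro Max_in) auto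
  then obtain k where kS: "k \<in> S" and kmax: "\<sigma>2 $ k = Max ((\<lambda>j. \<sigma>2 $ j) ` S)" by auto
  have mx: "\<And>j. z $ j = 1 \<Longrightarrow> \<sigma>2 $ j \<le> \<sigma>2 $ k"
    unfolding kmax S_def by (intro Max_ge) auto
  have good: "best_resp P \<sigma>2 k z = {0..1} \<or> best_resp P \<sigma>2 k z = {0..<1} \<or>
      (\<exists>y0. 0 \<le> y0 \<and> y0 < 1 \<and> best_resp P \<sigma>2 k z = {y0})"
  proof (cases "\<exists>s. s \<noteq> k \<and> z $ s = 1")
    case True
    then obtain s where "s \<noteq> k" "z $ s = 1" by blast
    then show ?thesis using br_multi[OF P irr \<sigma> zd _ _ mx] by blast
  next
    case False
    then have "\<And>j. j \<noteq> k \<Longrightarrow> z $ j < 1" using zd unfolding dom01_def by (auto simp: less_le)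
    then show ?thesis using br_single[OF P irr ap \<sigma> zd] by blast
  qed
  have sub: "{0..<1} \<subseteq> {x. upd z k x \<in> Cset (cnt z - 1)}"
  proof
    fix x :: real assume x: "x \<in> {0..<1}"
    have "{i. upd z k x $ i = 1} = S - {k}" using x unfolding S_def by (auto simp: upd_nth)
    then have "cnt (upd z k x) = cnt z - 1" unfolding cnt_def S_def[symmetric] using kS by simp
    moreover have "dom01 (upd z k x)" using x by (intro dom01_upd[OF zd]) auto
    ultimately show "x \<in> {x. upd z k x \<in> Cset (cnt z - 1)}" unfolding Cset_def by simp
  qed
  have meas: "{x. upd z k x \<in> Cset (cnt z - 1)} \<in> sets (unif (best_resp P \<sigma>2 k z))"
    unfolding sets_unif using measurable_sets[OF upd_measurable Cset_borel, of z k] by (simp add: vimage_def)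
  have "1 = emeasure (unif (best_resp P \<sigma>2 k z)) {0..<1}"
    by (rule unif_good[symmetric]) (use good in blast)
  also have "\<dots> \<le> emeasure (unif (best_resp P \<sigma>2 k z)) {x. upd z k x \<in> Cset (cnt z - 1)}"
    by (rule emeasure_mono[OF sub meas])
  finally have "1 / of_nat CARD('n) \<le> emeasure (unif (best_resp P \<sigma>2 k z)) {x. upd z k x \<in> Cset (cnt z - 1)} / of_nat CARD('n)"
    by (rule divide_right_mono_ennreal)
  also have "\<dots> \<le> br_kernel P \<sigma>2 z (Cset (cnt z - 1))" by (rule kernel_ge)
  finally show ?thesis .
qed

end


definition Rset :: "'a measure \<Rightarrow> (nat \<Rightarrow> 'a \<Rightarrow> 'b) \<Rightarrow> nat \<Rightarrow> (nat \<Rightarrow> 'b set) \<Rightarrow> 'a set" where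
  "Rset M Z t A = {\<omega> \<in> space M. \<forall>s\<le>t. Z s \<omega> \<in> A s}"

lemma kernel_mono:
  fixes z :: "real^'n"
  assumes "A \<subseteq> A'" "A' \<in> sets borel"
  shows "br_kernel P \<sigma>2 z A \<le> br_kernel P \<sigma>2 z A'"
proof -
  have "emeasure (unif (best_resp P \<sigma>2 k z)) {x. upd z k x \<in> A} \<le>
        emeasure (unif (best_resp P \<sigma>2 k z)) {x. upd z k x \<in> A'}" for k
  proof (rule emeasure_mono)
    show "{x. upd z k x \<in> A} \<subseteq> {x. upd z k x \<in> A'}" using assms(1) by auto
    show "{x. upd z k x \<in> A'} \<in> sets (unif (best_resp P \<sigma>2 k z))"
      unfolding sets_unif using measurable_sets[OF upd_measurable assms(2), of z k]
      by (simp add: vimage_def)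
  qed
  then show ?thesis unfolding br_kernel_def
    by (intro divide_right_mono_ennreal sum_mono) auto
qed

lemma Cset_mono: "a \<le> b \<Longrightarrow> Cset a \<subseteq> Cset b"
  unfolding Cset_def by auto

lemma Cset0: "Cset 0 = Gset"
proof (intro set_eqI iffI)
  fix w :: "real^'n" assume "w \<in> Cset 0"
  then have d: "dom01 w" and c: "card {i. w $ i = 1} = 0" unfolding Cset_def cnt_def by auto
  have "{i. w $ i = 1} = {}" using c by simp
  then have "w $ i \<noteq> 1" for i by blast
  then show "w \<in> Gset" using d unfolding Gset_def dom01_def by (auto simp: less_le)
next
  fix w :: "real^'n" assume "w \<in> Gset"
  then show "w \<in> Cset 0" using G_sub_C by blast
qed

lemma cnt_le: "cnt (w :: real^'n) \<le> CARD('n)"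
  unfolding cnt_def by (rule card_mono) auto

context
  fixes M :: "'a measure" and P :: "real^'n^'n" and \<sigma>2 :: "real^'n"
    and Z :: "nat \<Rightarrow> 'a \<Rightarrow> real^'n"
  assumes dyn: "is_br_dynamics M P \<sigma>2 Z"
begin

lemma ps: "prob_space M" using dyn unfolding is_br_dynamics_def by blast

lemma Zmeas[measurable]: "Z t \<in> M \<rightarrow>\<^sub>M borel" using dyn unfolding is_br_dynamics_def by blast

lemma rect:
  assumes "\<And>s. A s \<in> sets borel"
  shows "emeasure M (Rset M Z (Suc t) A) =
    (\<integral>\<^sup>+ \<omega>. indicator (Rset M Z t A) \<omega> * br_kernel P \<sigma>2 (Z t \<omega>) (A (Suc t)) \<partial>M)"
  using dyn assms unfolding is_br_dynamics_def Rset_def by blast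

lemma Rset_sets:
  assumes A: "\<And>s. A s \<in> sets borel"
  shows "Rset M Z t A \<in> sets M"
proof -
  have "Rset M Z t A = space M \<inter> (\<Inter>s\<in>{..t}. Z s -` A s \<inter> space M)"
    unfolding Rset_def by auto
  also have "\<dots> \<in> sets M"
    by (intro sets.Int sets.top sets.finite_INT measurable_sets[OF Zmeas A]) auto
  finally show ?thesis .
qed

lemma rect_zero:
  assumes A: "\<And>s. A s \<in> sets borel"
    and z: "\<And>\<omega>. \<omega> \<in> Rset M Z t A \<Longrightarrow> br_kernel P \<sigma>2 (Z t \<omega>) (A (Suc t)) = 0"
  shows "emeasure M (Rset M Z (Suc t) A) = 0"
proof -
  have "(\<integral>\<^sup>+ \<omega>. indicator (Rset M Z t A) \<omega> * br_kernel P \<sigma>2 (Z t \<omega>) (A (Suc t)) \<partial>M) = (\<integral>\<^sup>+ \<omega>. 0 \<partial>M)"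
    by (intro nn_integral_cong) (auto simp: indicator_def z)
  then show ?thesis using rect[OF A] by simp
qed

lemma rect_lower:
  assumes A: "\<And>s. A s \<in> sets borel"
    and z: "\<And>\<omega>. \<omega> \<in> Rset M Z t A \<Longrightarrow> br_kernel P \<sigma>2 (Z t \<omega>) (A (Suc t)) \<ge> c"
  shows "emeasure M (Rset M Z (Suc t) A) \<ge> c * emeasure M (Rset M Z t A)"
proof -
  have "c * emeasure M (Rset M Z t A) = (\<integral>\<^sup>+ \<omega>. c * indicator (Rset M Z t A) \<omega> \<partial>M)"
    using Rset_sets[OF A] by (simp add: nn_integral_cmult_indicator)
  also have "\<dots> \<le> (\<integral>\<^sup>+ \<omega>. indicator (Rset M Z t A) \<omega> * br_kernel P \<sigma>2 (Z t \<omega>) (A (Suc t)) \<partial>M)"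
    by (intro nn_integral_mono) (auto simp: indicator_def z)
  finally show ?thesis using rect[OF A] by simp
qed

lemma AE_step:
  assumes B: "B \<in> sets borel" and B': "B' \<in> sets borel"
    and k: "\<And>z. z \<in> B \<Longrightarrow> br_kernel P \<sigma>2 z (- B') = 0"
  shows "AE \<omega> in M. Z t \<omega> \<in> B \<longrightarrow> Z (Suc t) \<omega> \<in> B'"
proof -
  define A where "A s = (if s = t then B else if s = Suc t then - B' else UNIV)" for s
  have A: "A s \<in> sets borel" for s unfolding A_def using B B' by auto
  have n: "emeasure M (Rset M Z (Suc t) A) = 0"
  proof (rule rect_zero[OF A])
    fix \<omega> assume "\<omega> \<in> Rset M Z t A"
    then have "Z t \<omega> \<in> B" unfolding Rset_def A_def by auto
    then show "br_kernel P \<sigma>2 (Z t \<omega>) (A (Suc t)) = 0" using k unfolding A_def by simp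
  qed
  show ?thesis
  proof (rule AE_I')
    show "Rset M Z (Suc t) A \<in> null_sets M" using n Rset_sets[OF A] by (simp add: null_sets_def)
    show "{\<omega> \<in> space M. \<not> (Z t \<omega> \<in> B \<longrightarrow> Z (Suc t) \<omega> \<in> B')} \<subseteq> Rset M Z (Suc t) A"
      unfolding Rset_def A_def by (auto simp: le_Suc_eq)
  qed
qed

end


context
  fixes M :: "'a measure" and P :: "real^'n^'n" and \<sigma>2 :: "real^'n"
    and Z :: "nat \<Rightarrow> 'a \<Rightarrow> real^'n"
  assumes dyn: "is_br_dynamics M P \<sigma>2 Z"
    and P: "row_stochastic P" and irr: "irreducible_mat P" and ap: "aperiodic_mat P"
    and \<sigma>: "\<And>j. \<sigma>2 $ j > 0"
    and AED: "AE \<omega> in M. \<forall>t. Z t \<omega> \<in> Dset"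
begin

interpretation prob_space M by (rule ps[OF dyn])

definition NG :: "nat \<Rightarrow> 'a set" where "NG t = Rset M Z t (\<lambda>_. - Gset)"

lemma NG_sets: "NG t \<in> sets M"
  unfolding NG_def by (rule Rset_sets[OF dyn]) (intro borel_comp Gset_borel)

lemma step_bound:
  fixes w :: "real^'n"
  assumes w: "w \<in> Dset" "cnt w \<le> m"
  shows "br_kernel P \<sigma>2 w (Cset (m - 1)) \<ge> 1 / of_nat CARD('n)"
proof (cases "w \<in> Gset")
  case True then show ?thesis by (rule kernel_GC[OF P irr ap \<sigma>])
next
  case False
  have "1 / of_nat CARD('n) \<le> br_kernel P \<sigma>2 w (Cset (cnt w - 1))"
    by (rule kernel_C[OF P irr ap \<sigma> w(1) False])
  also have "\<dots> \<le> br_kernel P \<sigma>2 w (Cset (m - 1))"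
    by (intro kernel_mono Cset_mono Cset_borel) (use w in auto)
  finally show ?thesis .
qed

lemma decay: "measure M (NG (t + CARD('n))) \<le> (1 - (1 / real CARD('n)) ^ CARD('n)) * measure M (NG t)"
proof -
  define n where "n = CARD('n)"
  define A :: "nat \<Rightarrow> (real^'n) set" where "A s = (if s < t then - Gset else if s = t then Dset - Gset else Cset (n - (s - t)))" for s
  have A: "A s \<in> sets borel" for s unfolding A_def
    using Gset_borel Dset_borel Cset_borel by (auto intro: borel_comp)
  have chain: "emeasure M (Rset M Z (t + j) A) \<ge> (1 / of_nat n) ^ j * emeasure M (Rset M Z t A)"
    if "j \<le> n" for j
    using that
  proof (induction j)
    case 0 then show ?case by simp
  next
    case (Suc j)
    have "(1 / of_nat n) * emeasure M (Rset M Z (t + j) A) \<le> emeasure M (Rset M Z (Suc (t + j)) A)"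
    proof (rule rect_lower[OF dyn A])
      fix \<omega> assume \<omega>: "\<omega> \<in> Rset M Z (t + j) A"
      define w where "w = Z (t + j) \<omega>"
      have wA: "w \<in> A (t + j)" using \<omega> unfolding Rset_def w_def by auto
      have AS: "A (Suc (t + j)) = Cset (n - Suc j)" unfolding A_def by simp
      have wD': "w \<in> Dset \<and> cnt w \<le> n - j"
      proof (cases "j = 0")
        case True
        then show ?thesis using wA cnt_le[of w] unfolding A_def n_def by auto
      next
        case False
        then show ?thesis using wA unfolding A_def Cset_def Dset_def by auto
      qed
      then have wD: "w \<in> Dset" "cnt w \<le> n - j" by auto
      have k: "1 / of_nat CARD('n) \<le> br_kernel P \<sigma>2 w (Cset (n - j - 1))"
        by (rule step_bound[OF wD])
      show "1 / of_nat n \<le> br_kernel P \<sigma>2 (Z (t + j) \<omega>) (A (Suc (t + j)))"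
      proof -
        have "n - Suc j = n - j - 1" by simp
        then show ?thesis using k unfolding AS w_def n_def by simp
      qed
    qed
    moreover have "(1 / of_nat n) * ((1 / of_nat n) ^ j * emeasure M (Rset M Z t A))
        \<le> (1 / of_nat n) * emeasure M (Rset M Z (t + j) A)"
    proof -
      have "j \<le> n" using Suc.prems by simp
      then have "(1 / of_nat n) ^ j * emeasure M (Rset M Z t A) \<le> emeasure M (Rset M Z (t + j) A)"
        by (rule Suc.IH)
      then show ?thesis by (rule mult_left_mono) simp
    qed
    ultimately show ?case by (simp add: mult.assoc)
  qed
  have npos: "n > 0" unfolding n_def by simp
  define c where "c = (1 / real n) ^ n"
  have c: "0 < c" "c \<le> 1" unfolding c_def using npos by (auto simp: power_le_one)
  have R0: "emeasure M (Rset M Z t A) = emeasure M (NG t)"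
  proof (rule emeasure_eq_AE)
    show "AE \<omega> in M. (\<omega> \<in> Rset M Z t A) = (\<omega> \<in> NG t)"
      using AED
    proof eventually_elim
      case (elim \<omega>)
      have "s \<le> t \<Longrightarrow> (Z s \<omega> \<in> A s \<longleftrightarrow> Z s \<omega> \<in> - Gset)" for s
        using elim[rule_format, of s] unfolding A_def by auto
      then show ?case unfolding Rset_def NG_def by auto
    qed
  qed (auto intro: Rset_sets[OF dyn A] NG_sets)
  have Asub: "A s \<subseteq> - Gset" if "s \<le> t" for s using that unfolding A_def by auto
  have Rn_sub: "Rset M Z (t + n) A \<subseteq> NG t"
  proof
    fix \<omega> assume "\<omega> \<in> Rset M Z (t + n) A"
    then have "\<omega> \<in> space M" "\<And>s. s \<le> t \<Longrightarrow> Z s \<omega> \<in> A s" unfolding Rset_def by auto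
    then show "\<omega> \<in> NG t" using Asub unfolding NG_def Rset_def by blast
  qed
  have Rn_G: "Rset M Z (t + n) A \<inter> NG (t + n) = {}"
  proof -
    have "Z (t + n) \<omega> \<in> Gset" if "\<omega> \<in> Rset M Z (t + n) A" for \<omega>
      using that npos unfolding Rset_def A_def by (auto simp: Cset0)
    then show ?thesis unfolding NG_def Rset_def by auto
  qed
  have NGsub: "NG (t + n) \<subseteq> NG t" unfolding NG_def Rset_def by auto
  have e1: "emeasure M (Rset M Z (t + n) A) \<ge> (1 / of_nat n) ^ n * emeasure M (NG t)"
    using chain[of n] R0 by simp
  have "(1 / of_nat n :: ennreal) = ennreal (1 / real n)"
    using npos by (simp add: ennreal_of_nat_eq_real_of_nat divide_ennreal[symmetric])
  then have "((1 / of_nat n) ^ n :: ennreal) = ennreal c"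
    unfolding c_def by (simp add: ennreal_power)
  then have "ennreal (c * measure M (NG t)) \<le> ennreal (measure M (Rset M Z (t + n) A))"
    using e1 c by (simp add: emeasure_eq_measure ennreal_mult)
  then have e2: "c * measure M (NG t) \<le> measure M (Rset M Z (t + n) A)"
    by (simp add: ennreal_le_iff)
  have "measure M (NG (t + n)) \<le> measure M (NG t - Rset M Z (t + n) A)"
    using Rn_G NGsub by (intro finite_measure_mono) (auto intro: NG_sets Rset_sets[OF dyn A])
  also have "\<dots> = measure M (NG t) - measure M (Rset M Z (t + n) A)"
    using Rn_sub by (intro finite_measure_Diff) (auto intro: NG_sets Rset_sets[OF dyn A])
  also have "\<dots> \<le> (1 - c) * measure M (NG t)" using e2 by (simp add: algebra_simps)
  finally show ?thesis unfolding c_def n_def .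
qed

lemma reach_G: "AE \<omega> in M. \<exists>t. Z t \<omega> \<in> Gset"
proof -
  define n where "n = CARD('n)"
  define c where "c = (1 / real n) ^ n"
  have npos: "n > 0" unfolding n_def by simp
  have c: "0 < c" "c \<le> 1" unfolding c_def using npos by (auto simp: power_le_one)
  have k: "measure M (NG (k * n)) \<le> (1 - c) ^ k" for k
  proof (induction k)
    case 0 then show ?case by (simp add: prob_le_1)
  next
    case (Suc k)
    have "measure M (NG (Suc k * n)) \<le> (1 - c) * measure M (NG (k * n))"
      using decay[of "k * n"] unfolding c_def n_def by (simp add: add.commute)
    also have "\<dots> \<le> (1 - c) * (1 - c) ^ k" using Suc c by (intro mult_left_mono) auto
    finally show ?case by simp
  qed
  define N where "N = (\<Inter>t. NG t)"
  have Nsets: "N \<in> sets M" unfolding N_def using NG_sets by auto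
  have "measure M N \<le> (1 - c) ^ k" for k
    using k[of k] finite_measure_mono[of N "NG (k * n)"] NG_sets unfolding N_def by fastforce
  then have "measure M N \<le> 0"
    using c by (intro LIMSEQ_le_const[OF LIMSEQ_power_zero[of "1 - c"]]) auto
  then have "N \<in> null_sets M" using Nsets by (simp add: emeasure_eq_measure null_sets_def measure_nonneg antisym)
  then show ?thesis
    by (rule AE_I') (auto simp: N_def NG_def Rset_def)
qed

end


theorem lemma3:
  fixes M :: "'a measure" and P :: "real^'n^'n" and \<sigma>2 :: "real^'n"
    and Z :: "nat \<Rightarrow> 'a \<Rightarrow> real^'n"
  assumes "row_stochastic P" and "irreducible_mat P" and "aperiodic_mat P"
    and "\<forall>j. \<sigma>2 $ j > 0"
    and "is_br_dynamics M P \<sigma>2 Z"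
    and "AE \<omega> in M. \<forall>i. Z 0 \<omega> $ i \<in> {0..1}"
  shows "\<exists>T :: 'a \<Rightarrow> enat. T \<in> M \<rightarrow>\<^sub>M count_space UNIV \<and> (AE \<omega> in M. T \<omega> < \<infinity>) \<and>
           (\<forall>\<omega>\<in>space M. \<forall>t::nat. T \<omega> \<le> enat t \<longrightarrow> (\<forall>i. Z t \<omega> $ i < 1))"
proof -
  note P = assms(1) and irr = assms(2) and ap = assms(3) and dyn = assms(5)
  have \<sigma>: "\<And>j. \<sigma>2 $ j > 0" using assms(4) by blast
  interpret prob_space M by (rule ps[OF dyn])
  note Zm = Zmeas[OF dyn, measurable]
  have stepD: "AE \<omega> in M. Z t \<omega> \<in> Dset \<longrightarrow> Z (Suc t) \<omega> \<in> Dset" for t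
    by (rule AE_step[OF dyn Dset_borel Dset_borel]) (rule kernel_D)
  have stepG: "AE \<omega> in M. Z t \<omega> \<in> Gset \<longrightarrow> Z (Suc t) \<omega> \<in> Gset" for t
    by (rule AE_step[OF dyn Gset_borel Gset_borel]) (rule kernel_G[OF P irr ap \<sigma>])
  have D0: "AE \<omega> in M. Z 0 \<omega> \<in> Dset"
    using assms(6) by eventually_elim (auto simp: Dset_def dom01_def)
  have AED: "AE \<omega> in M. \<forall>t. Z t \<omega> \<in> Dset"
  proof -
    have "AE \<omega> in M. \<forall>t. Z t \<omega> \<in> Dset \<longrightarrow> Z (Suc t) \<omega> \<in> Dset"
      using stepD by (simp add: AE_all_countable)
    then show ?thesis using D0
    proof eventually_elim
      case (elim \<omega>)
      show ?case
      proof
        fix t show "Z t \<omega> \<in> Dset" by (induction t) (use elim in auto)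
      qed
    qed
  qed
  have AEG: "AE \<omega> in M. \<forall>t. Z t \<omega> \<in> Gset \<longrightarrow> Z (Suc t) \<omega> \<in> Gset"
    using stepG by (simp add: AE_all_countable)
  have reach: "AE \<omega> in M. \<exists>t. Z t \<omega> \<in> Gset" by (rule reach_G[OF dyn P irr ap \<sigma> AED])
  define Q where "Q t \<omega> = (\<forall>s\<ge>t. \<forall>i. Z s \<omega> $ i < 1)" for t \<omega>
  have AEQ: "AE \<omega> in M. \<exists>t. Q t \<omega>"
    using AEG reach
  proof eventually_elim
    case (elim \<omega>)
    then obtain t where t: "Z t \<omega> \<in> Gset" by blast
    have "Z (t + d) \<omega> \<in> Gset" for d by (induction d) (use t elim in auto)
    then have "Z s \<omega> \<in> Gset" if "s \<ge> t" for s using that by (metis le_add_diff_inverse)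
    then have "Q t \<omega>" unfolding Q_def Gset_def by blast
    then show ?case by blast
  qed
  define T where "T \<omega> = (if \<exists>t. Q t \<omega> then enat (LEAST t. Q t \<omega>) else \<infinity>)" for \<omega>
  have Qmono: "Q t \<omega> \<Longrightarrow> t \<le> t' \<Longrightarrow> Q t' \<omega>" for t t' \<omega> unfolding Q_def by auto
  have prop3: "\<forall>\<omega>\<in>space M. \<forall>t::nat. T \<omega> \<le> enat t \<longrightarrow> (\<forall>i. Z t \<omega> $ i < 1)"
  proof (intro ballI allI impI)
    fix \<omega> t i assume "T \<omega> \<le> enat t"
    then have ex: "\<exists>t. Q t \<omega>" and le: "(LEAST t. Q t \<omega>) \<le> t"
      unfolding T_def by (auto split: if_splits)
    have "Q (LEAST t. Q t \<omega>) \<omega>" using ex by (rule LeastI_ex)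
    then have "Q t \<omega>" using Qmono le by blast
    then show "Z t \<omega> $ i < 1" unfolding Q_def by simp
  qed
  have prop2: "AE \<omega> in M. T \<omega> < \<infinity>" using AEQ by eventually_elim (simp add: T_def)
  have Qm0: "{\<omega> \<in> space M. \<forall>s\<ge>t. \<forall>i. Z s \<omega> $ i < 1} \<in> sets M" for t by measurable
  have Qm: "{\<omega> \<in> space M. Q t \<omega>} \<in> sets M" for t using Qm0[of t] unfolding Q_def .
  have prop1: "T \<in> M \<rightarrow>\<^sub>M count_space UNIV"
    unfolding measurable_count_space_eq2_countable
  proof (intro conjI ballI)
    show "T \<in> space M \<rightarrow> UNIV" by simp
    fix a :: enat
    show "T -` {a} \<inter> space M \<in> sets M"
    proof (cases a)
      case (enat t)
      have "T -` {a} \<inter> space M = {\<omega> \<in> space M. Q t \<omega>} - (\<Union>t'\<in>{..<t}. {\<omega> \<in> space M. Q t' \<omega>})"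
      proof (intro set_eqI iffI)
        fix \<omega> assume \<omega>: "\<omega> \<in> T -` {a} \<inter> space M"
        then have ex: "\<exists>t. Q t \<omega>" and eq: "(LEAST t. Q t \<omega>) = t"
          unfolding T_def enat by (auto split: if_splits)
        have "Q t \<omega>" using LeastI_ex[OF ex] eq by simp
        moreover have "\<not> Q t' \<omega>" if "t' < t" for t' using not_less_Least[of t' "\<lambda>t. Q t \<omega>"] that eq by simp
        ultimately show "\<omega> \<in> {\<omega> \<in> space M. Q t \<omega>} - (\<Union>t'\<in>{..<t}. {\<omega> \<in> space M. Q t' \<omega>})"
          using \<omega> by auto
      next
        fix \<omega> assume \<omega>: "\<omega> \<in> {\<omega> \<in> space M. Q t \<omega>} - (\<Union>t'\<in>{..<t}. {\<omega> \<in> space M. Q t' \<omega>})"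
        then have q: "Q t \<omega>" and sp: "\<omega> \<in> space M" by auto
        have nq: "\<not> Q t' \<omega>" if "t' < t" for t' using \<omega> that by blast
        have "(LEAST t. Q t \<omega>) = t"
          by (rule Least_equality[where P="\<lambda>t. Q t \<omega>", OF q]) (use nq in \<open>meson not_le\<close>)
        then show "\<omega> \<in> T -` {a} \<inter> space M" using q sp unfolding T_def enat by auto
      qed
      also have "\<dots> \<in> sets M" using Qm by (intro sets.Diff sets.finite_UN) auto
      finally show ?thesis .
    next
      case infinity
      have "T -` {a} \<inter> space M = (\<Inter>t. space M - {\<omega> \<in> space M. Q t \<omega>})"
        unfolding T_def infinity by (auto split: if_splits)
      also have "\<dots> \<in> sets M" using Qm by (intro sets.countable_INT sets.Diff) auto
      finally show ?thesis .
    qed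
  qed
  show ?thesis using prop1 prop2 prop3 by blast
qed


end
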